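(* Let $F$ be a supertransversal fully-connected ReLU network. For cells $C,D$ of $\mathcal{C}(F)$ define the product $S(C)\cdot S(D)\in\{-1,0,1\}^N$ by $(S(C)\cdot S(D))_{ij}=S(C)_{ij}$ if $S(C)_{ij}\neq 0$ and $(S(C)\cdot S(D))_{ij}=S(D)_{ij}$ otherwise. Then for all cells $C,D$ of $\mathcal{C}(F)$ there exists a cell $E$ of $\mathcal{C}(F)$ with $S(C)\cdot S(D)=S(E)$, and moreover $C\le E$. Thus the set of sign sequences of cells of $\mathcal{C}(F)$ is a semigroup under this product.
   Context: A ReLU network of architecture $(n_0,\dots,n_m,1)$: affine maps $A_i:\mathbb{R}^{n_{i-1}}\to\mathbb{R}^{n_i}$, $1\le i\le m+1$, $n_{m+1}=1$; $F_i=\mathrm{ReLU}\circ A_i$ ($i\le m$), $G=A_{m+1}$, $F=G\circ F_m\circ\cdots\circ F_1$, $F_{(k)}=F_k\circ\cdots\circ F_1$ ($F_{(0)}=\mathrm{id}$), $F^{(k)}=G\circ F_m\circ\cdots\circ F_k:\mathbb{R}^{n_{k-1}}\to\mathbb{R}$ ($F^{(m+1)}=G$). Node maps $F_{ij}=\pi_j\circ A_i\circ F_{(i-1)}$, $1\le i\le m+1$, $1\le j\le n_i$; $N=n_1+\dots+n_m+1$. Polyhedra are finite intersections of closed half-spaces; $C^\circ$ is the relative interior; $C\le E$ means $C$ is a face of $E$ or equal to $E$. $R^{(i)}$ is the polyhedral complex on $\mathbb{R}^{n_{i-1}}$ induced by the hyperplanes $\{\pi_jA_i=0\}$, $1\le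 j\le n_i$ (cells: nonempty intersections of one choice among $\{\pi_jA_i\ge0\},\{\pi_jA_i\le0\},\{\pi_jA_i=0\}$ for each $j$). Canonical polyhedral complex: $\mathcal{C}(F_{(1)})=R^{(1)}$, $\mathcal{C}(F_{(k)})=\{C\cap F_{(k-1)}^{-1}(R)\neq\emptyset: C\in\mathcal{C}(F_{(k-1)}),R\in R^{(k)}\}$, $2\le k\le m+1$; $\mathcal{C}(F)$ is the last one. The same construction for $F^{(k)}$ gives $\mathcal{C}(F^{(k)})$ on $\mathbb{R}^{n_{k-1}}$, with $\mathcal{C}(F^{(m+1)})=R^{(m+1)}$. The sign sequence $S(C)=s(C)\in\{-1,0,1\}^N$ of a cell has entries $S(C)_{ij}=\mathrm{sgn}(F_{ij}(x))$ for $x\in C^\circ$. A map affine on cells of a polyhedral complex $X$ is transverse on cells of $X$ to a submanifold $Z$ if its restriction to $C^\circ$ is transverse to $Z$ for each cell $C$. Supertransversal: for every $1\le i\le m$, $F_i$ is transverse on cells of $R^{(i)}$ to the interior of every cell of $\mathcal{C}(F^{(i+1)})$. *)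

theory Defs
  imports "HOL-Analysis.Analysis"
begin

text \<open>Points of R^d are represented as functions nat => real vanishing at
  all coordinates k >= d (coordinates are indexed 0..d-1).  All vector
  operations are written out pointwise.\<close>

definition Rsp :: "nat \<Rightarrow> (nat \<Rightarrow> real) set" where
  "Rsp d = {x. \<forall>k\<ge>d. x k = 0}"

definition relu :: "real \<Rightarrow> real" where
  "relu t = max 0 t"

definition sgnz :: "real \<Rightarrow> int" where
  "sgnz t = (if t > 0 then 1 else if t < 0 then -1 else 0)"

definition affhull :: "(nat \<Rightarrow> real) set \<Rightarrow> (nat \<Rightarrow> real) set" where
  "affhull S = {y. \<exists>T u. finite T \<and> T \<noteq> {} \<and> T \<subseteq> S \<and> sum u T = 1 \<and>
                        y = (\<lambda>k. \<Sum>p\<in>T. u p * p k)}"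

text \<open>Relative interior (w.r.t. the sup-norm, which induces the Euclidean
  topology on every R^d).\<close>
definition relint :: "(nat \<Rightarrow> real) set \<Rightarrow> (nat \<Rightarrow> real) set" where
  "relint S = {x \<in> S. \<exists>e>0. \<forall>y\<in>affhull S. (\<forall>k. \<bar>y k - x k\<bar> < e) \<longrightarrow> y \<in> S}"

text \<open>Tangent space (= direction of the affine hull) of a relatively open
  subset of an affine subspace.\<close>
definition tspace :: "(nat \<Rightarrow> real) set \<Rightarrow> (nat \<Rightarrow> real) set" where
  "tspace S = {(\<lambda>k. y k - z k) | y z. y \<in> affhull S \<and> z \<in> affhull S}"

definition convexset :: "(nat \<Rightarrow> real) set \<Rightarrow> bool" where
  "convexset S \<longleftrightarrow> (\<forall>x\<in>S. \<forall>y\<in>S. \<forall>t::real. 0 \<le> t \<and> t \<le> 1 \<longrightarrow>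
                       (\<lambda>k. (1 - t) * x k + t * y k) \<in> S)"

definition faceof :: "(nat \<Rightarrow> real) set \<Rightarrow> (nat \<Rightarrow> real) set \<Rightarrow> bool" where
  "faceof T S \<longleftrightarrow> T \<subseteq> S \<and> convexset T \<and>
     (\<forall>a\<in>S. \<forall>b\<in>S. \<forall>x\<in>T. a \<noteq> b \<and> (\<exists>t::real. 0 < t \<and> t < 1 \<and> x = (\<lambda>k. (1 - t) * a k + t * b k))
        \<longrightarrow> a \<in> T \<and> b \<in> T)"

definition face_le :: "(nat \<Rightarrow> real) set \<Rightarrow> (nat \<Rightarrow> real) set \<Rightarrow> bool" where
  "face_le C E \<longleftrightarrow> C = E \<or> faceof C E"

definition dirderiv :: "((nat \<Rightarrow> real) \<Rightarrow> (nat \<Rightarrow> real)) \<Rightarrow> (nat \<Rightarrow> real) \<Rightarrow> (nat \<Rightarrow> real) \<Rightarrow> (nat \<Rightarrow> real) \<Rightarrow> bool" where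
  "dirderiv f x v u \<longleftrightarrow>
     (\<forall>j. ((\<lambda>t. (f (\<lambda>k. x k + t * v k) j - f x j) / t) \<longlongrightarrow> u j) (at 0))"

text \<open>f (affine on the cell C) restricted to the relative interior of C is
  transverse to the submanifold Z of R^d: at every x in relint C with f x in Z,
  df_x(T_x C) + T_{f x} Z = R^d.\<close>
definition transverse_on_cell ::
  "((nat \<Rightarrow> real) \<Rightarrow> (nat \<Rightarrow> real)) \<Rightarrow> (nat \<Rightarrow> real) set \<Rightarrow> nat \<Rightarrow> (nat \<Rightarrow> real) set \<Rightarrow> bool" where
  "transverse_on_cell f C d Z \<longleftrightarrow>
     (\<forall>x\<in>relint C. f x \<in> Z \<longrightarrow>
        (\<forall>w\<in>Rsp d. \<exists>v\<in>tspace (relint C). \<exists>u z. dirderiv f x v u \<and> z \<in> tspace Z \<and>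
                     w = (\<lambda>j. u j + z j)))"

text \<open>Architecture (n 0, ..., n m, n (m+1) = 1); layer i (1 <= i <= m+1) has
  weights W i j k (row j < n i, column k < n (i-1)) and bias b i j.\<close>

definition affmap :: "(nat \<Rightarrow> nat) \<Rightarrow> (nat \<Rightarrow> nat \<Rightarrow> nat \<Rightarrow> real) \<Rightarrow> (nat \<Rightarrow> nat \<Rightarrow> real) \<Rightarrow>
                      nat \<Rightarrow> (nat \<Rightarrow> real) \<Rightarrow> (nat \<Rightarrow> real)" where
  "affmap n W b i x = (\<lambda>j. if j < n i then (\<Sum>k<n (i - 1). W i j k * x k) + b i j else 0)"

definition layer :: "(nat \<Rightarrow> nat) \<Rightarrow> (nat \<Rightarrow> nat \<Rightarrow> nat \<Rightarrow> real) \<Rightarrow> (nat \<Rightarrow> nat \<Rightarrow> real) \<Rightarrow>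
                     nat \<Rightarrow> (nat \<Rightarrow> real) \<Rightarrow> (nat \<Rightarrow> real)" where
  "layer n W b i x = (\<lambda>j. relu (affmap n W b i x j))"

fun Fpre :: "(nat \<Rightarrow> nat) \<Rightarrow> (nat \<Rightarrow> nat \<Rightarrow> nat \<Rightarrow> real) \<Rightarrow> (nat \<Rightarrow> nat \<Rightarrow> real) \<Rightarrow>
             nat \<Rightarrow> (nat \<Rightarrow> real) \<Rightarrow> (nat \<Rightarrow> real)" where
  "Fpre n W b 0 x = x"
| "Fpre n W b (Suc k) x = layer n W b (Suc k) (Fpre n W b k x)"

text \<open>Flay k j = F_{k+j} o ... o F_k\<close>
fun Flay :: "(nat \<Rightarrow> nat) \<Rightarrow> (nat \<Rightarrow> nat \<Rightarrow> nat \<Rightarrow> real) \<Rightarrow> (nat \<Rightarrow> nat \<Rightarrow> real) \<Rightarrow>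
             nat \<Rightarrow> nat \<Rightarrow> (nat \<Rightarrow> real) \<Rightarrow> (nat \<Rightarrow> real)" where
  "Flay n W b k 0 x = layer n W b k x"
| "Flay n W b k (Suc j) x = layer n W b (k + Suc j) (Flay n W b k j x)"

text \<open>Node map F_ij = pi_j o A_i o F_(i-1)  (1 <= i <= m+1, 0 <= j < n i)\<close>
definition node :: "(nat \<Rightarrow> nat) \<Rightarrow> (nat \<Rightarrow> nat \<Rightarrow> nat \<Rightarrow> real) \<Rightarrow> (nat \<Rightarrow> nat \<Rightarrow> real) \<Rightarrow>
                    nat \<Rightarrow> nat \<Rightarrow> (nat \<Rightarrow> real) \<Rightarrow> real" where
  "node n W b i j x = affmap n W b i (Fpre n W b (i - 1) x) j"

definition signcond :: "int \<Rightarrow> real \<Rightarrow> bool" where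
  "signcond s t \<longleftrightarrow> (if s = 1 then t \<ge> 0 else if s = -1 then t \<le> 0 else t = 0)"

text \<open>Cells of R^(i), the complex on R^{n (i-1)} induced by the hyperplanes
  {pi_j A_i = 0}.\<close>
definition Rcells :: "(nat \<Rightarrow> nat) \<Rightarrow> (nat \<Rightarrow> nat \<Rightarrow> nat \<Rightarrow> real) \<Rightarrow> (nat \<Rightarrow> nat \<Rightarrow> real) \<Rightarrow>
                      nat \<Rightarrow> (nat \<Rightarrow> real) set set" where
  "Rcells n W b i =
     {R. R \<noteq> {} \<and> (\<exists>\<sigma>::nat \<Rightarrow> int. (\<forall>j<n i. \<sigma> j \<in> {-1, 0, 1}) \<and>
          R = {x \<in> Rsp (n (i - 1)). \<forall>j<n i. signcond (\<sigma> j) (affmap n W b i x j)})}"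

text \<open>cplx k j = canonical polyhedral complex (on R^{n (k-1)}) of the composite
  of layers k, ..., k+j (the last one taken with ReLU or not is irrelevant,
  only the hyperplanes of A_{k+j} enter).  Thus C(F_(k)) = cplx 1 (k-1),
  C(F) = cplx 1 m, C(F^(k)) = cplx k (m+1-k).\<close>
fun cplx :: "(nat \<Rightarrow> nat) \<Rightarrow> (nat \<Rightarrow> nat \<Rightarrow> nat \<Rightarrow> real) \<Rightarrow> (nat \<Rightarrow> nat \<Rightarrow> real) \<Rightarrow>
             nat \<Rightarrow> nat \<Rightarrow> (nat \<Rightarrow> real) set set" where
  "cplx n W b k 0 = Rcells n W b k"
| "cplx n W b k (Suc j) =
     {E. E \<noteq> {} \<and> (\<exists>C R. C \<in> cplx n W b k j \<and> R \<in> Rcells n W b (k + Suc j) \<and>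
                          E = C \<inter> {x. Flay n W b k j x \<in> R})}"

text \<open>Sign sequence S(C)_{ij} = sgn F_ij(x), x in relint C; index set
  1 <= i <= m+1, j < n i (entries outside are 0).\<close>
definition signseq :: "nat \<Rightarrow> (nat \<Rightarrow> nat) \<Rightarrow> (nat \<Rightarrow> nat \<Rightarrow> nat \<Rightarrow> real) \<Rightarrow> (nat \<Rightarrow> nat \<Rightarrow> real) \<Rightarrow>
                       (nat \<Rightarrow> real) set \<Rightarrow> nat \<Rightarrow> nat \<Rightarrow> int" where
  "signseq m n W b C = (\<lambda>i j. if 1 \<le> i \<and> i \<le> Suc m \<and> j < n i
        then sgnz (node n W b i j (SOME x. x \<in> relint C)) else 0)"

definition sprod :: "(nat \<Rightarrow> nat \<Rightarrow> int) \<Rightarrow> (nat \<Rightarrow> nat \<Rightarrow> int) \<Rightarrow> nat \<Rightarrow> nat \<Rightarrow> int" where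
  "sprod s t = (\<lambda>i j. if s i j \<noteq> 0 then s i j else t i j)"

definition supertransversal :: "nat \<Rightarrow> (nat \<Rightarrow> nat) \<Rightarrow> (nat \<Rightarrow> nat \<Rightarrow> nat \<Rightarrow> real) \<Rightarrow> (nat \<Rightarrow> nat \<Rightarrow> real) \<Rightarrow> bool" where
  "supertransversal m n W b \<longleftrightarrow>
     (\<forall>i. 1 \<le> i \<and> i \<le> m \<longrightarrow>
        (\<forall>C\<in>Rcells n W b i. \<forall>K\<in>cplx n W b (Suc i) (m - i).
            transverse_on_cell (layer n W b i) C (n i) (relint K)))"

end

theory Submission
  imports Defs
begin

definition affn :: "nat \<Rightarrow> ((nat \<Rightarrow> real) \<Rightarrow> real) \<Rightarrow> bool" where
  "affn d g \<longleftrightarrow> (\<exists>c c0. \<forall>x. g x = (\<Sum>l<d. c l * x l) + c0)"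

definition zv :: "nat \<Rightarrow> real" where "zv = (\<lambda>_. 0)"

lemma affn_plus:
  assumes "affn d g" shows "g (\<lambda>l. x l + v l) = g x + (g v - g zv)"
proof -
  obtain c c0 where g: "\<And>x. g x = (\<Sum>l<d. c l * x l) + c0" using assms unfolding affn_def by blast
  show ?thesis unfolding g zv_def by (simp add: distrib_left sum.distrib)
qed

lemma affn_scale:
  assumes "affn d g" shows "g (\<lambda>l. s * v l) - g zv = s * (g v - g zv)"
proof -
  obtain c c0 where g: "\<And>x. g x = (\<Sum>l<d. c l * x l) + c0" using assms unfolding affn_def by blast
  show ?thesis unfolding g zv_def by (simp add: sum_distrib_left algebra_simps)
qed

lemma affn_minus:
  assumes "affn d g" shows "g (\<lambda>l. v l - w l) - g zv = (g v - g zv) - (g w - g zv)"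
proof -
  obtain c c0 where g: "\<And>x. g x = (\<Sum>l<d. c l * x l) + c0" using assms unfolding affn_def by blast
  show ?thesis unfolding g zv_def by (simp add: right_diff_distrib sum_subtractf)
qed

lemma affn_add2:
  assumes "affn d g" shows "g (\<lambda>l. v l + w l) - g zv = (g v - g zv) + (g w - g zv)"
  using affn_plus[OF assms, of v w] by simp

lemma affn_comb:
  assumes "affn d g" shows "g (\<lambda>l. (1 - t) * x l + t * y l) = (1 - t) * g x + t * g y"
proof -
  obtain c c0 where g: "\<And>x. g x = (\<Sum>l<d. c l * x l) + c0" using assms unfolding affn_def by blast
  have "(\<Sum>l<d. c l * ((1 - t) * x l + t * y l)) = (\<Sum>l<d. (1 - t) * (c l * x l) + t * (c l * y l))"
    by (rule sum.cong) (auto simp: algebra_simps)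
  also have "\<dots> = (1 - t) * (\<Sum>l<d. c l * x l) + t * (\<Sum>l<d. c l * y l)"
    by (simp add: sum.distrib sum_distrib_left)
  finally have "(\<Sum>l<d. c l * ((1 - t) * x l + t * y l)) = (1 - t) * (\<Sum>l<d. c l * x l) + t * (\<Sum>l<d. c l * y l)" .
  then show ?thesis unfolding g by (simp add: algebra_simps)
qed

lemma affn_hull:
  assumes "affn d g" "finite T" "sum u T = 1"
  shows "g (\<lambda>l. \<Sum>p\<in>T. u p * p l) = (\<Sum>p\<in>T. u p * g p)"
proof -
  obtain c c0 where g: "\<And>x. g x = (\<Sum>l<d. c l * x l) + c0" using assms unfolding affn_def by blast
  have "(\<Sum>l<d. c l * (\<Sum>p\<in>T. u p * p l)) = (\<Sum>p\<in>T. u p * (\<Sum>l<d. c l * p l))"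
    by (simp add: sum_distrib_left algebra_simps sum.swap[of _ T])
  moreover have "(\<Sum>p\<in>T. u p * c0) = c0" using assms(3) by (simp add: sum_distrib_right[symmetric])
  ultimately show ?thesis unfolding g by (simp add: distrib_left sum.distrib)
qed

lemma affn_lip:
  assumes "affn d g"
  shows "\<exists>B\<ge>0. \<forall>x y e. (\<forall>l<d. \<bar>y l - x l\<bar> \<le> e) \<longrightarrow> \<bar>g y - g x\<bar> \<le> B * e"
proof -
  obtain c c0 where g: "\<And>x. g x = (\<Sum>l<d. c l * x l) + c0" using assms unfolding affn_def by blast
  show ?thesis
  proof (intro exI[of _ "\<Sum>l<d. \<bar>c l\<bar>"] conjI allI impI)
    show "0 \<le> (\<Sum>l<d. \<bar>c l\<bar>)" by (simp add: sum_nonneg)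
    fix x y :: "nat \<Rightarrow> real" and e assume h: "\<forall>l<d. \<bar>y l - x l\<bar> \<le> e"
    have "\<bar>g y - g x\<bar> = \<bar>\<Sum>l<d. c l * (y l - x l)\<bar>" unfolding g
      by (simp add: right_diff_distrib sum_subtractf)
    also have "\<dots> \<le> (\<Sum>l<d. \<bar>c l * (y l - x l)\<bar>)" by (rule sum_abs)
    also have "\<dots> \<le> (\<Sum>l<d. \<bar>c l\<bar> * e)"
      by (rule sum_mono) (use h in \<open>auto simp: abs_mult intro: mult_left_mono\<close>)
    also have "\<dots> = (\<Sum>l<d. \<bar>c l\<bar>) * e" by (simp add: sum_distrib_right)
    finally show "\<bar>g y - g x\<bar> \<le> (\<Sum>l<d. \<bar>c l\<bar>) * e" .
  qed
qed

lemma affn_const: "affn d (\<lambda>x. a)"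
  unfolding affn_def by (rule exI[of _ "\<lambda>_. 0"], rule exI[of _ a]) simp

lemma affn_coord: assumes "l < d" shows "affn d (\<lambda>x. x l)"
  unfolding affn_def
proof (intro exI allI)
  fix x :: "nat \<Rightarrow> real"
  have "(\<Sum>la<d. (if la = l then 1 else 0) * x la) = (\<Sum>la<d. (if la = l then x la else 0))"
    by (rule sum.cong) auto
  also have "\<dots> = x l" using assms by (simp add: sum.delta)
  finally show "x l = (\<Sum>la<d. (if la = l then 1 else 0) * x la) + 0" by simp
qed

lemma affn_affmap_comp:
  assumes "\<forall>l<n (i - 1). affn d (\<lambda>x. L x l)"
  shows "affn d (\<lambda>x. affmap n W b i (L x) j)"
proof (cases "j < n i")
  case False then show ?thesis unfolding affmap_def by (simp add: affn_const)
next
  case True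
  from assms have "\<forall>l\<in>{..<n (i - 1)}. \<exists>cc. \<forall>x. L x l = (\<Sum>q<d. fst cc q * x q) + snd cc"
    unfolding affn_def by auto
  then obtain CC where CC: "\<And>l x. l < n (i - 1) \<Longrightarrow> L x l = (\<Sum>q<d. fst (CC l) q * x q) + snd (CC l)"
    by (metis bchoice lessThan_iff)
  show ?thesis unfolding affn_def
  proof (intro exI allI)
    fix x
    have "affmap n W b i (L x) j = (\<Sum>l<n (i - 1). W i j l * ((\<Sum>q<d. fst (CC l) q * x q) + snd (CC l))) + b i j"
      unfolding affmap_def using True CC by simp
    also have "\<dots> = (\<Sum>q<d. (\<Sum>l<n (i - 1). W i j l * fst (CC l) q) * x q) + ((\<Sum>l<n (i - 1). W i j l * snd (CC l)) + b i j)"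
      by (simp add: distrib_left sum.distrib sum_distrib_left sum_distrib_right sum.swap[of _ "{..<d}"] algebra_simps)
    finally show "affmap n W b i (L x) j = (\<Sum>q<d. (\<Sum>l<n (i - 1). W i j l * fst (CC l) q) * x q) + ((\<Sum>l<n (i - 1). W i j l * snd (CC l)) + b i j)" .
  qed
qed

lemma affn_affmap: "affn (n (i - 1)) (\<lambda>x. affmap n W b i x j)"
  using affn_affmap_comp[of n i "n (i - 1)" "\<lambda>x. x" W b j] affn_coord by auto

lemma affhull_Rsp: "S \<subseteq> Rsp d \<Longrightarrow> affhull S \<subseteq> Rsp d"
  unfolding affhull_def Rsp_def by (auto intro!: sum.neutral)

lemma affn_vanish_hull:
  assumes "affn d g" "\<forall>p\<in>S. g p = 0" "y \<in> affhull S"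
  shows "g y = 0"
proof -
  obtain T u where T: "finite T" "T \<subseteq> S" "sum u T = 1" "y = (\<lambda>k. \<Sum>p\<in>T. u p * p k)"
    using assms(3) unfolding affhull_def by auto
  have "g y = (\<Sum>p\<in>T. u p * g p)" unfolding T(4) by (rule affn_hull[OF assms(1) T(1,3)])
  also have "\<dots> = 0" using assms(2) T(2) by (auto intro!: sum.neutral)
  finally show ?thesis .
qed

lemma relint_sub: "relint S \<subseteq> S"
  unfolding relint_def by auto

lemma affn_tspace:
  assumes "affn d g" "\<forall>p\<in>S. g p = 0" "v \<in> tspace (relint S)"
  shows "g (\<lambda>l. x l + v l) = g x"
proof -
  obtain y z where v: "v = (\<lambda>k. y k - z k)" "y \<in> affhull (relint S)" "z \<in> affhull (relint S)"
    using assms(3) unfolding tspace_def by auto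
  have "\<forall>p\<in>relint S. g p = 0" using assms(2) relint_sub by auto
  then have "g y = 0" "g z = 0" using affn_vanish_hull[OF assms(1)] v by auto
  moreover have "g v - g zv = (g y - g zv) - (g z - g zv)" unfolding v(1) by (rule affn_minus[OF assms(1)])
  ultimately show ?thesis using affn_plus[OF assms(1), of x v] by simp
qed

lemma tspace_Rsp:
  assumes "S \<subseteq> Rsp d" "v \<in> tspace (relint S)"
  shows "v \<in> Rsp d"
proof -
  have "affhull (relint S) \<subseteq> Rsp d" using affhull_Rsp relint_sub assms(1) by blast
  moreover obtain y z where v: "v = (\<lambda>k. y k - z k)" "y \<in> affhull (relint S)" "z \<in> affhull (relint S)"
    using assms(2) unfolding tspace_def by auto
  ultimately have "y \<in> Rsp d" "z \<in> Rsp d" by auto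
  then show ?thesis unfolding v(1) Rsp_def by auto
qed

lemma aux_comb: "(q::real) \<noteq> 0 \<Longrightarrow> (1 / q) * (q * a - e * c) + (e / q) * c = a"
  by (simp add: right_diff_distrib)

lemma ev_exists: "eventually P (at_right (0::real)) \<Longrightarrow> \<exists>s>0. P s"
  unfolding eventually_at_right_field by (metis field_lbound_gt_zero)

lemma ev_sign:
  fixes a c :: real
  assumes "a \<noteq> 0"
  shows "\<forall>\<^sub>F s in at_right 0. sgnz (a + s * c) = sgnz a"
proof -
  have t: "((\<lambda>s. a + s * c) \<longlongrightarrow> a) (at_right 0)"
    by (auto intro!: tendsto_eq_intros)
  show ?thesis
  proof (cases "a > 0")
    case True
    have "\<forall>\<^sub>F s in at_right 0. 0 < a + s * c" using order_tendstoD(1)[OF t True] .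
    then show ?thesis by eventually_elim (use True in \<open>auto simp: sgnz_def\<close>)
  next
    case False
    then have a: "a < 0" using assms by simp
    have "\<forall>\<^sub>F s in at_right 0. a + s * c < 0" using order_tendstoD(2)[OF t a] .
    then show ?thesis by eventually_elim (use a in \<open>auto simp: sgnz_def\<close>)
  qed
qed

lemma ev_lt:
  fixes B a :: real
  assumes "a > 0"
  shows "\<forall>\<^sub>F e in at_right 0. B * e < a"
proof -
  have t: "((\<lambda>e. B * e) \<longlongrightarrow> 0) (at_right 0)" by (auto intro!: tendsto_eq_intros)
  show ?thesis using order_tendstoD(2)[OF t assms] .
qed

lemma signcond_nz: "signcond s t \<Longrightarrow> t \<noteq> 0 \<Longrightarrow> s = sgnz t"
  unfolding signcond_def sgnz_def by (auto split: if_splits)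

lemma sgnz_signcond_eq: "sgnz t = s \<Longrightarrow> signcond s t"
  unfolding signcond_def sgnz_def by (auto split: if_splits)

lemma same_sign_nz:
  assumes "signcond s a" "signcond s c" "a \<noteq> 0" "0 \<le> t" "t < 1"
  shows "(1 - t) * a + t * c \<noteq> 0"
proof -
  have t: "1 - t > 0" using assms by simp
  have "s = sgnz a" using signcond_nz assms by blast
  then consider "a > 0" "s = 1" | "a < 0" "s = -1" using assms(3) unfolding sgnz_def by (auto split: if_splits)
  then show ?thesis
  proof cases
    case 1
    then have "c \<ge> 0" using assms(2) unfolding signcond_def by simp
    then have "(1 - t) * a + t * c > 0" using 1 t assms(4) by (simp add: add_pos_nonneg)
    then show ?thesis by simp
  next
    case 2
    then have "c \<le> 0" using assms(2) unfolding signcond_def by simp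
    then have "(1 - t) * a + t * c < 0" using 2 t assms(4) by (simp add: add_neg_nonpos mult_pos_neg mult_nonneg_nonpos)
    then show ?thesis by simp
  qed
qed

lemma zero_sum:
  assumes "signcond s a" "signcond s c" "0 < t" "t < 1" "(1 - t) * a + t * c = 0"
  shows "a = 0 \<and> c = 0"
proof -
  have t1: "1 - t > 0" using assms by simp
  consider "s = 1" | "s = -1" | "s \<noteq> 1" "s \<noteq> -1" by blast
  then show ?thesis
  proof cases
    case 1
    then have "a \<ge> 0" "c \<ge> 0" using assms unfolding signcond_def by auto
    moreover have "(1 - t) * a \<ge> 0" "t * c \<ge> 0" using calculation t1 assms(3) by auto
    ultimately have "(1 - t) * a = 0" "t * c = 0" using assms(5) by linarith+
    then show ?thesis using t1 assms(3) by simp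
  next
    case 2
    then have "a \<le> 0" "c \<le> 0" using assms unfolding signcond_def by auto
    moreover have "(1 - t) * a \<le> 0" "t * c \<le> 0" using calculation t1 assms(3)
      by (auto simp: mult_nonneg_nonpos)
    ultimately have "(1 - t) * a = 0" "t * c = 0" using assms(5) by linarith+
    then show ?thesis using t1 assms(3) by simp
  next
    case 3
    then show ?thesis using assms unfolding signcond_def by auto
  qed
qed

context
  fixes n :: "nat \<Rightarrow> nat" and W :: "nat \<Rightarrow> nat \<Rightarrow> nat \<Rightarrow> real" and b :: "nat \<Rightarrow> nat \<Rightarrow> real"
begin

fun pre :: "nat \<Rightarrow> nat \<Rightarrow> (nat \<Rightarrow> real) \<Rightarrow> (nat \<Rightarrow> real)" where
  "pre k 0 x = x"
| "pre k (Suc d) x = layer n W b (k + d) (pre k d x)"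

definition nodeK :: "nat \<Rightarrow> nat \<Rightarrow> nat \<Rightarrow> (nat \<Rightarrow> real) \<Rightarrow> real" where
  "nodeK k i j x = affmap n W b i (pre k (i - k) x) j"

definition cellK :: "nat \<Rightarrow> nat \<Rightarrow> (nat \<Rightarrow> nat \<Rightarrow> int) \<Rightarrow> (nat \<Rightarrow> real) set" where
  "cellK k M \<sigma> = {x \<in> Rsp (n (k - 1)). \<forall>i j. k \<le> i \<and> i \<le> M \<and> j < n i \<longrightarrow> signcond (\<sigma> i j) (nodeK k i j x)}"

definition svK :: "nat \<Rightarrow> nat \<Rightarrow> (nat \<Rightarrow> real) \<Rightarrow> nat \<Rightarrow> nat \<Rightarrow> int" where
  "svK k M x = (\<lambda>i j. if k \<le> i \<and> i \<le> M \<and> j < n i then sgnz (nodeK k i j x) else 0)"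

fun Lpre :: "nat \<Rightarrow> (nat \<Rightarrow> nat \<Rightarrow> int) \<Rightarrow> nat \<Rightarrow> (nat \<Rightarrow> real) \<Rightarrow> (nat \<Rightarrow> real)" where
  "Lpre k \<sigma> 0 x = x"
| "Lpre k \<sigma> (Suc d) x = (\<lambda>j. if j < n (k + d) \<and> \<sigma> (k + d) j = 1 then affmap n W b (k + d) (Lpre k \<sigma> d x) j else 0)"

definition gK :: "nat \<Rightarrow> (nat \<Rightarrow> nat \<Rightarrow> int) \<Rightarrow> nat \<Rightarrow> nat \<Rightarrow> (nat \<Rightarrow> real) \<Rightarrow> real" where
  "gK k \<sigma> i j x = affmap n W b i (Lpre k \<sigma> (i - k) x) j"

lemma affmap_out: "\<not> j < n i \<Longrightarrow> affmap n W b i x j = 0"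
  unfolding affmap_def by simp

lemma layer_out: "\<not> j < n i \<Longrightarrow> layer n W b i x j = 0"
  unfolding layer_def relu_def by (simp add: affmap_out)

lemma layer_Rsp: "layer n W b i x \<in> Rsp (n i)"
  unfolding Rsp_def using layer_out by auto

lemma Fpre_pre: "Fpre n W b i x = pre 1 i x"
  by (induction i) auto

lemma Flay_pre: "Flay n W b k j x = pre k (Suc j) x"
  by (induction j) auto

lemma pre_shift: "pre k (Suc d) x = pre (Suc k) d (layer n W b k x)"
  by (induction d) auto

lemma node_nodeK: "node n W b i j x = nodeK 1 i j x"
  unfolding node_def nodeK_def Fpre_pre by simp

lemma nodeK_shift: "k < i \<Longrightarrow> nodeK k i j x = nodeK (Suc k) i j (layer n W b k x)"
  unfolding nodeK_def by (metis Suc_diff_Suc pre_shift)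

lemma nodeK_self: "nodeK k k j x = affmap n W b k x j"
  unfolding nodeK_def by simp

lemma affn_Lpre: "l < n (k + d - 1) \<Longrightarrow> affn (n (k - 1)) (\<lambda>x. Lpre k \<sigma> d x l)"
proof (induction d arbitrary: l)
  case 0
  then show ?case by (simp add: affn_coord)
next
  case (Suc d)
  show ?case
  proof (cases "l < n (k + d) \<and> \<sigma> (k + d) l = 1")
    case True
    have "affn (n (k - 1)) (\<lambda>x. affmap n W b (k + d) (Lpre k \<sigma> d x) l)"
      by (rule affn_affmap_comp) (use Suc.IH in auto)
    then show ?thesis using True by simp
  next
    case False
    then have e: "(\<lambda>x. Lpre k \<sigma> (Suc d) x l) = (\<lambda>x. 0)" by auto
    show ?thesis unfolding e by (rule affn_const)
  qed
qed

lemma affn_gK: "k \<le> i \<Longrightarrow> affn (n (k - 1)) (gK k \<sigma> i j)"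
  unfolding gK_def
  by (rule affn_affmap_comp) (use affn_Lpre[of _ k "i - k"] in auto)

lemma relu_signcond1: "signcond s t \<Longrightarrow> relu t = (if s = 1 then t else 0)"
  unfolding signcond_def relu_def by (auto split: if_splits)

lemma GL2:
  assumes "\<forall>i j. k \<le> i \<and> i < k + d \<and> j < n i \<longrightarrow> signcond (\<sigma> i j) (gK k \<sigma> i j x)"
  shows "pre k d x = Lpre k \<sigma> d x"
  using assms
proof (induction d)
  case 0 then show ?case by simp
next
  case (Suc d)
  then have IH: "pre k d x = Lpre k \<sigma> d x" by auto
  show ?case
  proof
    fix j
    show "pre k (Suc d) x j = Lpre k \<sigma> (Suc d) x j"
    proof (cases "j < n (k + d)")
      case True
      then have "signcond (\<sigma> (k + d) j) (gK k \<sigma> (k + d) j x)" using Suc.prems by auto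
      then show ?thesis using True IH unfolding gK_def
        by (simp add: layer_def relu_signcond1)
    next
      case False then show ?thesis by (simp add: layer_out)
    qed
  qed
qed

lemma GL1:
  assumes "\<forall>i j. k \<le> i \<and> i < k + d \<and> j < n i \<longrightarrow> signcond (\<sigma> i j) (nodeK k i j x)"
  shows "pre k d x = Lpre k \<sigma> d x"
  using assms
proof (induction d)
  case 0 then show ?case by simp
next
  case (Suc d)
  then have IH: "pre k d x = Lpre k \<sigma> d x" by auto
  show ?case
  proof
    fix j
    show "pre k (Suc d) x j = Lpre k \<sigma> (Suc d) x j"
    proof (cases "j < n (k + d)")
      case True
      then have "signcond (\<sigma> (k + d) j) (nodeK k (k + d) j x)" using Suc.prems by auto
      then show ?thesis using True IH unfolding nodeK_def
        by (simp add: layer_def relu_signcond1)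
    next
      case False then show ?thesis by (simp add: layer_out)
    qed
  qed
qed

lemma cellK_node_g:
  assumes "x \<in> cellK k M \<sigma>" "k \<le> i" "i \<le> M"
  shows "nodeK k i j x = gK k \<sigma> i j x"
proof -
  have "pre k (i - k) x = Lpre k \<sigma> (i - k) x"
    by (rule GL1) (use assms in \<open>auto simp: cellK_def\<close>)
  then show ?thesis unfolding nodeK_def gK_def by simp
qed

lemma cellK_alt:
  "cellK k M \<sigma> = {x \<in> Rsp (n (k - 1)). \<forall>i j. k \<le> i \<and> i \<le> M \<and> j < n i \<longrightarrow> signcond (\<sigma> i j) (gK k \<sigma> i j x)}"
proof (intro set_eqI iffI)
  fix x assume x: "x \<in> cellK k M \<sigma>"
  then show "x \<in> {x \<in> Rsp (n (k - 1)). \<forall>i j. k \<le> i \<and> i \<le> M \<and> j < n i \<longrightarrow> signcond (\<sigma> i j) (gK k \<sigma> i j x)}"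
    using cellK_node_g[OF x] by (auto simp: cellK_def)
next
  fix x assume x: "x \<in> {x \<in> Rsp (n (k - 1)). \<forall>i j. k \<le> i \<and> i \<le> M \<and> j < n i \<longrightarrow> signcond (\<sigma> i j) (gK k \<sigma> i j x)}"
  have "\<And>i. k \<le> i \<Longrightarrow> i \<le> M \<Longrightarrow> pre k (i - k) x = Lpre k \<sigma> (i - k) x"
    by (rule GL2) (use x in auto)
  then show "x \<in> cellK k M \<sigma>" using x unfolding cellK_def nodeK_def gK_def by auto
qed

definition nrm :: "int \<Rightarrow> int" where
  "nrm s = (if s = 1 then 1 else if s = -1 then -1 else 0)"

lemma signcond_nrm: "signcond (nrm s) t = signcond s t"
  unfolding nrm_def signcond_def by auto

lemma nrm_range: "nrm s \<in> {-1, 0, 1}"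
  unfolding nrm_def by auto

lemma nrm_0: "nrm s \<noteq> -1 \<Longrightarrow> nrm s \<noteq> 1 \<Longrightarrow> nrm s = 0"
  unfolding nrm_def by auto

lemma cellK_cong:
  assumes "\<forall>i j. k \<le> i \<and> i \<le> M \<and> j < n i \<longrightarrow> \<sigma> i j = \<sigma>' i j"
  shows "cellK k M \<sigma> = cellK k M \<sigma>'"
  using assms unfolding cellK_def by auto

lemma cellK_single:
  "cellK k k \<sigma> = {x \<in> Rsp (n (k - 1)). \<forall>j<n k. signcond (\<sigma> k j) (affmap n W b k x j)}"
proof (intro set_eqI iffI)
  fix x assume x: "x \<in> cellK k k \<sigma>"
  have R: "x \<in> Rsp (n (k - 1))" using x unfolding cellK_def by blast
  have A: "\<forall>i j. k \<le> i \<and> i \<le> k \<and> j < n i \<longrightarrow> signcond (\<sigma> i j) (nodeK k i j x)"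
    using x unfolding cellK_def by blast
  have "\<forall>j<n k. signcond (\<sigma> k j) (affmap n W b k x j)"
  proof (intro allI impI)
    fix j assume "j < n k"
    then have "signcond (\<sigma> k j) (nodeK k k j x)" using A by blast
    then show "signcond (\<sigma> k j) (affmap n W b k x j)" unfolding nodeK_self .
  qed
  then show "x \<in> {x \<in> Rsp (n (k - 1)). \<forall>j<n k. signcond (\<sigma> k j) (affmap n W b k x j)}" using R by blast
next
  fix x assume x: "x \<in> {x \<in> Rsp (n (k - 1)). \<forall>j<n k. signcond (\<sigma> k j) (affmap n W b k x j)}"
  have R: "x \<in> Rsp (n (k - 1))" using x by blast
  have A: "\<forall>j<n k. signcond (\<sigma> k j) (affmap n W b k x j)" using x by blast
  have "\<forall>i j. k \<le> i \<and> i \<le> k \<and> j < n i \<longrightarrow> signcond (\<sigma> i j) (nodeK k i j x)"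
  proof (intro allI impI)
    fix i j assume h: "k \<le> i \<and> i \<le> k \<and> j < n i"
    then have ik: "i = k" by simp
    have "signcond (\<sigma> k j) (affmap n W b k x j)" using A h ik by blast
    then show "signcond (\<sigma> i j) (nodeK k i j x)" unfolding ik nodeK_self .
  qed
  then show "x \<in> cellK k k \<sigma>" using R unfolding cellK_def by blast
qed

lemma pre_Rsp: "pre k (Suc d) x \<in> Rsp (n (k + d))"
  using layer_Rsp by simp

lemma cellK_step:
  assumes "k \<le> M"
  shows "cellK k (Suc M) \<sigma> = cellK k M \<sigma> \<inter> {x. pre k (Suc M - k) x \<in> cellK (Suc M) (Suc M) \<sigma>}"
proof -
  have e: "Suc M - k = Suc (M - k)" "k + (M - k) = M" using assms by auto
  have r: "\<And>x. pre k (Suc M - k) x \<in> Rsp (n M)" using pre_Rsp[of k "M - k"] e by simp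
  have nd: "\<And>x j. nodeK k (Suc M) j x = affmap n W b (Suc M) (pre k (Suc M - k) x) j"
    unfolding nodeK_def by simp
  show ?thesis
  proof (intro set_eqI iffI)
    fix x assume x: "x \<in> cellK k (Suc M) \<sigma>"
    then have A: "x \<in> cellK k M \<sigma>" unfolding cellK_def by (simp add: le_Suc_eq)
    have "\<And>j. j < n (Suc M) \<Longrightarrow> signcond (\<sigma> (Suc M) j) (nodeK k (Suc M) j x)"
      using x assms unfolding cellK_def by auto
    then have "pre k (Suc M - k) x \<in> cellK (Suc M) (Suc M) \<sigma>"
      unfolding cellK_single using r nd by simp
    then show "x \<in> cellK k M \<sigma> \<inter> {x. pre k (Suc M - k) x \<in> cellK (Suc M) (Suc M) \<sigma>}" using A by simp
  next
    fix x assume x: "x \<in> cellK k M \<sigma> \<inter> {x. pre k (Suc M - k) x \<in> cellK (Suc M) (Suc M) \<sigma>}"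
    then have A: "x \<in> cellK k M \<sigma>" and B: "\<And>j. j < n (Suc M) \<Longrightarrow> signcond (\<sigma> (Suc M) j) (nodeK k (Suc M) j x)"
      unfolding cellK_single using nd by auto
    have "\<forall>i j. k \<le> i \<and> i \<le> Suc M \<and> j < n i \<longrightarrow> signcond (\<sigma> i j) (nodeK k i j x)"
    proof (intro allI impI)
      fix i j assume h: "k \<le> i \<and> i \<le> Suc M \<and> j < n i"
      show "signcond (\<sigma> i j) (nodeK k i j x)"
      proof (cases "i = Suc M")
        case True then show ?thesis using B h by simp
      next
        case False then show ?thesis using A h unfolding cellK_def by auto
      qed
    qed
    then show "x \<in> cellK k (Suc M) \<sigma>" using A unfolding cellK_def by blast
  qed
qed

lemma Rcells_char: "Rcells n W b k = {R. R \<noteq> {} \<and> (\<exists>\<sigma>. R = cellK k k \<sigma>)}"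
proof (intro set_eqI iffI)
  fix R assume "R \<in> Rcells n W b k"
  then obtain \<sigma> where R: "R \<noteq> {}" "R = {x \<in> Rsp (n (k - 1)). \<forall>j<n k. signcond (\<sigma> j) (affmap n W b k x j)}"
    unfolding Rcells_def by blast
  have "R = cellK k k (\<lambda>i. \<sigma>)" unfolding cellK_single R(2) by simp
  then show "R \<in> {R. R \<noteq> {} \<and> (\<exists>\<sigma>. R = cellK k k \<sigma>)}" using R(1) by blast
next
  fix R assume "R \<in> {R. R \<noteq> {} \<and> (\<exists>\<sigma>. R = cellK k k \<sigma>)}"
  then obtain \<sigma> where R: "R \<noteq> {}" "R = cellK k k \<sigma>" by blast
  let ?s = "\<lambda>j. nrm (\<sigma> k j)"
  have v: "\<forall>j<n k. ?s j \<in> {-1, 0, 1}" using nrm_range by blast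
  have eq: "R = {x \<in> Rsp (n (k - 1)). \<forall>j<n k. signcond (?s j) (affmap n W b k x j)}"
    unfolding R(2) cellK_single signcond_nrm ..
  have "\<exists>\<sigma>'. (\<forall>j<n k. \<sigma>' j \<in> {-1, 0, 1}) \<and> R = {x \<in> Rsp (n (k - 1)). \<forall>j<n k. signcond (\<sigma>' j) (affmap n W b k x j)}"
    by (rule exI[of _ ?s], rule conjI[OF v eq])
  then show "R \<in> Rcells n W b k" unfolding Rcells_def mem_Collect_eq using R(1) by (rule conjI[rotated])
qed

lemma cplx_char: "cplx n W b k j = {E. E \<noteq> {} \<and> (\<exists>\<sigma>. E = cellK k (k + j) \<sigma>)}"
proof (induction j)
  case 0
  then show ?case using Rcells_char by simp
next
  case (Suc j)
  let ?M = "k + j"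
  have stp: "\<And>\<sigma>. cellK k (Suc ?M) \<sigma> = cellK k ?M \<sigma> \<inter> {x. Flay n W b k j x \<in> cellK (Suc ?M) (Suc ?M) \<sigma>}"
    using cellK_step[of k ?M] by (simp add: Flay_pre Suc_diff_le)
  show ?case
  proof (intro set_eqI iffI)
    fix E assume "E \<in> cplx n W b k (Suc j)"
    then obtain C R where E: "E \<noteq> {}" "C \<in> cplx n W b k j" "R \<in> Rcells n W b (k + Suc j)"
      "E = C \<inter> {x. Flay n W b k j x \<in> R}" by auto
    from E(2) obtain \<sigma> where s1: "C = cellK k ?M \<sigma>" unfolding Suc.IH by blast
    from E(3) obtain \<tau> where s2: "R = cellK (Suc ?M) (Suc ?M) \<tau>" unfolding Rcells_char by auto
    define \<sigma>' where "\<sigma>' = \<sigma>(Suc ?M := \<tau> (Suc ?M))"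
    have c1: "cellK k ?M \<sigma>' = cellK k ?M \<sigma>" by (rule cellK_cong) (auto simp: \<sigma>'_def)
    have c2: "cellK (Suc ?M) (Suc ?M) \<sigma>' = cellK (Suc ?M) (Suc ?M) \<tau>"
      by (rule cellK_cong) (auto simp: \<sigma>'_def)
    have "E = cellK k (Suc ?M) \<sigma>'" unfolding stp[of \<sigma>'] c1 c2 E(4) s1 s2 ..
    then show "E \<in> {E. E \<noteq> {} \<and> (\<exists>\<sigma>. E = cellK k (k + Suc j) \<sigma>)}" using E(1) by auto
  next
    fix E assume "E \<in> {E. E \<noteq> {} \<and> (\<exists>\<sigma>. E = cellK k (k + Suc j) \<sigma>)}"
    then obtain \<sigma> where E: "E \<noteq> {}" "E = cellK k (Suc ?M) \<sigma>" by auto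
    have ne1: "cellK k ?M \<sigma> \<noteq> {}" using E stp[of \<sigma>] by blast
    have ne2: "cellK (Suc ?M) (Suc ?M) \<sigma> \<noteq> {}" using E stp[of \<sigma>] by blast
    have C: "cellK k ?M \<sigma> \<in> cplx n W b k j" unfolding Suc.IH using ne1 by blast
    have R: "cellK (Suc ?M) (Suc ?M) \<sigma> \<in> Rcells n W b (k + Suc j)" unfolding Rcells_char using ne2 by auto
    have "E = cellK k ?M \<sigma> \<inter> {x. Flay n W b k j x \<in> cellK (Suc ?M) (Suc ?M) \<sigma>}" using E(2) stp by simp
    then show "E \<in> cplx n W b k (Suc j)" using E(1) C R by (simp only: cplx.simps) blast
  qed
qed

lemma sgnz_signcond: "signcond (sgnz t) t"
  unfolding sgnz_def signcond_def by auto

lemma signcond_conv: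
  assumes "signcond s a" "signcond s c" "0 \<le> t" "t \<le> 1"
  shows "signcond s ((1 - t) * a + t * c)"
proof -
  have t: "0 \<le> 1 - t" using assms by simp
  show ?thesis
  proof (cases "s = 1")
    case True then show ?thesis using assms t unfolding signcond_def by simp
  next
    case False
    note F = False
    show ?thesis
    proof (cases "s = -1")
      case True
      then have "a \<le> 0" "c \<le> 0" using assms unfolding signcond_def by auto
      then have "(1 - t) * a \<le> 0" "t * c \<le> 0" using t assms(3) by (auto simp: mult_nonneg_nonpos)
      then show ?thesis using True unfolding signcond_def by auto
    next
      case False then show ?thesis using F assms unfolding signcond_def by auto
    qed
  qed
qed

lemma signcond_zero: "signcond s 0"
  unfolding signcond_def by auto

lemma exact_in_cell: "x \<in> Rsp (n (k - 1)) \<Longrightarrow> x \<in> cellK k M (svK k M x)"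
proof -
  assume x: "x \<in> Rsp (n (k - 1))"
  have "\<forall>i j. k \<le> i \<and> i \<le> M \<and> j < n i \<longrightarrow> signcond (svK k M x i j) (nodeK k i j x)"
  proof (intro allI impI)
    fix i j assume "k \<le> i \<and> i \<le> M \<and> j < n i"
    then have "svK k M x i j = sgnz (nodeK k i j x)" unfolding svK_def by simp
    then show "signcond (svK k M x i j) (nodeK k i j x)" using sgnz_signcond by simp
  qed
  then show ?thesis using x unfolding cellK_def by blast
qed

lemma cellK_Rsp: "cellK k M \<sigma> \<subseteq> Rsp (n (k - 1))"
  unfolding cellK_def by auto

lemma cellK_conv:
  assumes "x \<in> cellK k M \<sigma>" "y \<in> cellK k M \<sigma>" "0 \<le> t" "t \<le> 1"
  shows "(\<lambda>l. (1 - t) * x l + t * y l) \<in> cellK k M \<sigma> \<and>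
    (\<forall>i j. k \<le> i \<and> i \<le> M \<longrightarrow> nodeK k i j (\<lambda>l. (1 - t) * x l + t * y l) = (1 - t) * nodeK k i j x + t * nodeK k i j y)"
proof -
  let ?z = "\<lambda>l. (1 - t) * x l + t * y l"
  have g: "\<And>i j. k \<le> i \<Longrightarrow> gK k \<sigma> i j ?z = (1 - t) * gK k \<sigma> i j x + t * gK k \<sigma> i j y"
    by (rule affn_comb[OF affn_gK])
  have zR: "?z \<in> Rsp (n (k - 1))" using assms(1,2) unfolding cellK_def Rsp_def by auto
  have "?z \<in> cellK k M \<sigma>"
    unfolding cellK_alt using zR
  proof (intro CollectI conjI allI impI)
    fix i j assume h: "k \<le> i \<and> i \<le> M \<and> j < n i"
    have "signcond (\<sigma> i j) (gK k \<sigma> i j x)" "signcond (\<sigma> i j) (gK k \<sigma> i j y)"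
      using assms(1,2) h unfolding cellK_alt by auto
    then show "signcond (\<sigma> i j) (gK k \<sigma> i j ?z)" unfolding g[OF conjunct1[OF h]]
      using assms(3,4) by (rule signcond_conv)
  qed
  moreover have "\<forall>i j. k \<le> i \<and> i \<le> M \<longrightarrow> nodeK k i j ?z = (1 - t) * nodeK k i j x + t * nodeK k i j y"
    using cellK_node_g[OF calculation] cellK_node_g[OF assms(1)] cellK_node_g[OF assms(2)] g by auto
  ultimately show ?thesis by blast
qed

lemma cellK_conv_exact:
  assumes "x \<in> cellK k M \<sigma>" "y \<in> Rsp (n (k - 1))" "svK k M y = \<sigma>" "0 < t" "t \<le> 1"
  shows "svK k M (\<lambda>l. (1 - t) * x l + t * y l) = \<sigma>"
proof -
  have y: "y \<in> cellK k M \<sigma>" using exact_in_cell[OF assms(2), where M=M] assms(3) by simp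
  note cc = cellK_conv[OF assms(1) y, of t] 
  show ?thesis
  proof (intro ext)
    fix i j
    show "svK k M (\<lambda>l. (1 - t) * x l + t * y l) i j = \<sigma> i j"
    proof (cases "k \<le> i \<and> i \<le> M \<and> j < n i")
      case False then show ?thesis using assms(3) unfolding svK_def by auto
    next
      case True
      have sy: "\<sigma> i j = sgnz (nodeK k i j y)" using assms(3) True unfolding svK_def by auto
      have sx: "signcond (\<sigma> i j) (nodeK k i j x)" using assms(1) True unfolding cellK_def by auto
      have nz: "nodeK k i j (\<lambda>l. (1 - t) * x l + t * y l) = (1 - t) * nodeK k i j x + t * nodeK k i j y"
        using cc assms(4,5) True by auto
      have "sgnz ((1 - t) * nodeK k i j x + t * nodeK k i j y) = sgnz (nodeK k i j y)"
      proof -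
        have t1: "0 \<le> 1 - t" using assms(5) by simp
        consider "nodeK k i j y > 0" | "nodeK k i j y < 0" | "nodeK k i j y = 0" by linarith
        then show ?thesis
        proof cases
          case 1
          then have "nodeK k i j x \<ge> 0" using sx sy unfolding sgnz_def signcond_def by auto
          then have "(1 - t) * nodeK k i j x + t * nodeK k i j y > 0"
            using 1 t1 assms(4) by (simp add: add_nonneg_pos)
          then show ?thesis using 1 unfolding sgnz_def by auto
        next
          case 2
          then have "nodeK k i j x \<le> 0" using sx sy unfolding sgnz_def signcond_def by auto
          then have "(1 - t) * nodeK k i j x + t * nodeK k i j y < 0"
            using 2 t1 assms(4) by (simp add: add_nonpos_neg mult_nonneg_nonpos mult_pos_neg)
          then show ?thesis using 2 unfolding sgnz_def by auto
        next
          case 3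
          then have "nodeK k i j x = 0" using sx sy unfolding sgnz_def signcond_def by auto
          then show ?thesis using 3 by simp
        qed
      qed
      then show ?thesis using True nz sy unfolding svK_def by simp
    qed
  qed
qed

lemma cellK_refine: "cellK k M \<sigma> \<subseteq> cellK k M (sprod \<sigma> \<tau>)"
proof
  fix x assume x: "x \<in> cellK k M \<sigma>"
  have "\<forall>i j. k \<le> i \<and> i \<le> M \<and> j < n i \<longrightarrow> signcond (sprod \<sigma> \<tau> i j) (nodeK k i j x)"
  proof (intro allI impI)
    fix i j assume h: "k \<le> i \<and> i \<le> M \<and> j < n i"
    then have s: "signcond (\<sigma> i j) (nodeK k i j x)" using x unfolding cellK_def by blast
    show "signcond (sprod \<sigma> \<tau> i j) (nodeK k i j x)"
    proof (cases "\<sigma> i j = 0")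
      case True
      then have "nodeK k i j x = 0" using s unfolding signcond_def by simp
      then show ?thesis by (simp add: signcond_zero)
    next
      case False
      then show ?thesis using s unfolding sprod_def by simp
    qed
  qed
  then show "x \<in> cellK k M (sprod \<sigma> \<tau>)" using x unfolding cellK_def by blast
qed

lemma finite_idx: "finite {(i, j). k \<le> i \<and> i \<le> M \<and> j < n i}"
proof -
  have "{(i, j). k \<le> i \<and> i \<le> M \<and> j < n i} \<subseteq> (SIGMA i:{..M}. {..<n i})" by auto
  then show ?thesis by (rule finite_subset) auto
qed

lemma relint_exact:
  assumes x: "x \<in> Rsp (n (k - 1))"
  shows "x \<in> relint (cellK k M (svK k M x))"
proof -
  define \<sigma> where "\<sigma> = svK k M x"
  define E where "E = cellK k M \<sigma>"
  define I where "I = {(i, j). k \<le> i \<and> i \<le> M \<and> j < n i}"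
  have fI: "finite I" unfolding I_def by (rule finite_idx)
  have xE: "x \<in> E" unfolding E_def \<sigma>_def by (rule exact_in_cell[OF x])
  have gx: "\<And>i j. k \<le> i \<Longrightarrow> i \<le> M \<Longrightarrow> gK k \<sigma> i j x = nodeK k i j x"
    using cellK_node_g[OF xE[unfolded E_def]] by simp
  have "\<forall>\<kappa>\<in>I. \<exists>B\<ge>0. \<forall>x y e. (\<forall>l<n (k - 1). \<bar>y l - x l\<bar> \<le> e) \<longrightarrow> \<bar>gK k \<sigma> (fst \<kappa>) (snd \<kappa>) y - gK k \<sigma> (fst \<kappa>) (snd \<kappa>) x\<bar> \<le> B * e"
    using affn_lip[OF affn_gK] unfolding I_def by auto
  then obtain B where B: "\<And>\<kappa> x y e. \<kappa> \<in> I \<Longrightarrow> (\<forall>l<n (k - 1). \<bar>y l - x l\<bar> \<le> e) \<Longrightarrow> \<bar>gK k \<sigma> (fst \<kappa>) (snd \<kappa>) y - gK k \<sigma> (fst \<kappa>) (snd \<kappa>) x\<bar> \<le> B \<kappa> * e"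
    by metis
  have "\<forall>\<kappa>\<in>I. \<forall>\<^sub>F e in at_right 0. \<sigma> (fst \<kappa>) (snd \<kappa>) \<noteq> 0 \<longrightarrow> B \<kappa> * e < \<bar>gK k \<sigma> (fst \<kappa>) (snd \<kappa>) x\<bar>"
  proof
    fix \<kappa> assume "\<kappa> \<in> I"
    show "\<forall>\<^sub>F e in at_right 0. \<sigma> (fst \<kappa>) (snd \<kappa>) \<noteq> 0 \<longrightarrow> B \<kappa> * e < \<bar>gK k \<sigma> (fst \<kappa>) (snd \<kappa>) x\<bar>"
    proof (cases "\<sigma> (fst \<kappa>) (snd \<kappa>) = 0")
      case True then show ?thesis by simp
    next
      case False
      then have "gK k \<sigma> (fst \<kappa>) (snd \<kappa>) x \<noteq> 0"
        using \<open>\<kappa> \<in> I\<close> gx unfolding \<sigma>_def svK_def I_def sgnz_def by (auto split: if_splits)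
      then have "\<bar>gK k \<sigma> (fst \<kappa>) (snd \<kappa>) x\<bar> > 0" by simp
      from ev_lt[OF this, of "B \<kappa>"] show ?thesis by eventually_elim simp
    qed
  qed
  from eventually_ball_finite[OF fI this] obtain e where e: "e > 0"
    "\<forall>\<kappa>\<in>I. \<sigma> (fst \<kappa>) (snd \<kappa>) \<noteq> 0 \<longrightarrow> B \<kappa> * e < \<bar>gK k \<sigma> (fst \<kappa>) (snd \<kappa>) x\<bar>"
    using ev_exists by blast
  have "\<forall>y\<in>affhull E. (\<forall>l. \<bar>y l - x l\<bar> < e) \<longrightarrow> y \<in> E"
  proof (intro ballI impI)
    fix y assume y: "y \<in> affhull E" and close: "\<forall>l. \<bar>y l - x l\<bar> < e"
    have yR: "y \<in> Rsp (n (k - 1))" using affhull_Rsp[OF cellK_Rsp] y unfolding E_def by blast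
    have "\<forall>i j. k \<le> i \<and> i \<le> M \<and> j < n i \<longrightarrow> signcond (\<sigma> i j) (gK k \<sigma> i j y)"
    proof (intro allI impI)
      fix i j assume h: "k \<le> i \<and> i \<le> M \<and> j < n i"
      then have \<kappa>: "(i, j) \<in> I" unfolding I_def by simp
      show "signcond (\<sigma> i j) (gK k \<sigma> i j y)"
      proof (cases "\<sigma> i j = 0")
        case True
        have "\<forall>p\<in>E. gK k \<sigma> i j p = 0"
        proof
          fix p assume pE: "p \<in> E"
          have pc: "p \<in> cellK k M \<sigma>" using pE unfolding E_def .
          have "signcond (\<sigma> i j) (nodeK k i j p)" using pc h unfolding cellK_def by blast
          moreover have "nodeK k i j p = gK k \<sigma> i j p" using cellK_node_g[OF pc] h by blast
          ultimately have "signcond (\<sigma> i j) (nodeK k i j p)" "nodeK k i j p = gK k \<sigma> i j p" by auto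
          then show "gK k \<sigma> i j p = 0" using True unfolding signcond_def by simp
        qed
        moreover have "affn (n (k - 1)) (gK k \<sigma> i j)" using affn_gK h by simp
        ultimately have "gK k \<sigma> i j y = 0" using affn_vanish_hull y by blast
        then show ?thesis by (simp add: signcond_zero)
      next
        case False
        have "\<bar>gK k \<sigma> i j y - gK k \<sigma> i j x\<bar> \<le> B (i, j) * e"
          using B[OF \<kappa>, of y x e] close by (simp add: less_imp_le)
        moreover have "B (i, j) * e < \<bar>gK k \<sigma> i j x\<bar>" using e(2) \<kappa> False by auto
        moreover have "\<sigma> i j = sgnz (gK k \<sigma> i j x)" using gx h unfolding \<sigma>_def svK_def by auto
        ultimately show ?thesis unfolding sgnz_def signcond_def by (auto split: if_splits)
      qed
    qed
    then show "y \<in> E" unfolding E_def cellK_alt using yR by blast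
  qed
  then show ?thesis using xE e(1) unfolding relint_def E_def \<sigma>_def by blast
qed

lemma relint_sv:
  assumes y: "y \<in> relint (cellK k M \<sigma>)" and r: "r \<in> Rsp (n (k - 1))" "svK k M r = \<sigma>"
  shows "svK k M y = \<sigma>"
proof (cases "y = r")
  case True then show ?thesis using r by simp
next
  case False
  define E where "E = cellK k M \<sigma>"
  define d where "d = n (k - 1)"
  obtain e where e: "e > 0" "\<forall>z\<in>affhull E. (\<forall>l. \<bar>z l - y l\<bar> < e) \<longrightarrow> z \<in> E" and yE: "y \<in> E"
    using y unfolding relint_def E_def by blast
  have yR: "y \<in> Rsp d" using yE cellK_Rsp unfolding E_def d_def by blast
  define D where "D = (\<Sum>l<d. \<bar>y l - r l\<bar>) + 1"
  have D: "D \<ge> 1" unfolding D_def by (simp add: sum_nonneg)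
  define \<epsilon> where "\<epsilon> = e / (2 * D)"
  have \<epsilon>: "\<epsilon> > 0" unfolding \<epsilon>_def using e D by simp
  define y' where "y' = (\<lambda>l. (1 + \<epsilon>) * y l - \<epsilon> * r l)"
  have rE: "r \<in> E" unfolding E_def using exact_in_cell[OF r(1), where M=M] r(2) by simp
  have "y' \<in> affhull E"
    unfolding affhull_def
  proof (intro CollectI exI conjI)
    let ?u = "\<lambda>p. if p = y then 1 + \<epsilon> else - \<epsilon>"
    show "finite {y, r}" by simp
    show "{y, r} \<noteq> {}" by simp
    show "{y, r} \<subseteq> E" using yE rE by simp
    show "sum ?u {y, r} = 1" using False by simp
    show "y' = (\<lambda>k. \<Sum>p\<in>{y, r}. ?u p * p k)" unfolding y'_def using False by auto
  qed
  moreover have "\<forall>l. \<bar>y' l - y l\<bar> < e"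
  proof
    fix l
    have "y' l - y l = \<epsilon> * (y l - r l)" unfolding y'_def by (simp add: algebra_simps)
    then have "\<bar>y' l - y l\<bar> = \<epsilon> * \<bar>y l - r l\<bar>" using \<epsilon> by (simp add: abs_mult)
    also have "\<dots> < e"
    proof (cases "l < d")
      case True
      have "\<bar>y l - r l\<bar> \<le> (\<Sum>l<d. \<bar>y l - r l\<bar>)"
        using True by (intro member_le_sum) auto
      then have "\<bar>y l - r l\<bar> \<le> D" unfolding D_def by simp
      then have "\<epsilon> * \<bar>y l - r l\<bar> \<le> \<epsilon> * D" using \<epsilon> by (simp add: mult_left_mono)
      also have "\<epsilon> * D = e / 2" unfolding \<epsilon>_def using D by simp
      finally show ?thesis using e by simp
    next
      case False
      then have "y l = 0" "r l = 0" using yR r(1) unfolding Rsp_def d_def by auto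
      then show ?thesis using e by simp
    qed
    finally show "\<bar>y' l - y l\<bar> < e" .
  qed
  ultimately have y'E: "y' \<in> cellK k M \<sigma>" using e(2) unfolding E_def by blast
  define t where "t = \<epsilon> / (1 + \<epsilon>)"
  have t: "0 < t" "t \<le> 1" unfolding t_def using \<epsilon> by auto
  have "(\<lambda>l. (1 - t) * y' l + t * r l) = y"
  proof
    fix l
    have e1: "1 + \<epsilon> \<noteq> 0" using \<epsilon> by simp
    have A: "1 - t = 1 / (1 + \<epsilon>)" unfolding t_def using e1 by (simp add: field_simps)
    show "(1 - t) * y' l + t * r l = y l"
      unfolding A unfolding t_def y'_def using aux_comb[OF e1] by simp
  qed
  then show ?thesis using cellK_conv_exact[OF y'E r t] by simp
qed

lemma cell_generic:
  assumes ne: "cellK k M \<sigma> \<noteq> {}"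
  shows "\<exists>x\<in>cellK k M \<sigma>. cellK k M \<sigma> = cellK k M (svK k M x)"
proof -
  define E where "E = cellK k M \<sigma>"
  define I where "I = {(i, j). k \<le> i \<and> i \<le> M \<and> j < n i}"
  have fI: "finite I" unfolding I_def by (rule finite_idx)
  have claim: "S \<subseteq> I \<Longrightarrow> \<exists>x\<in>E. \<forall>\<kappa>\<in>S. (\<exists>y\<in>E. nodeK k (fst \<kappa>) (snd \<kappa>) y \<noteq> 0) \<longrightarrow> nodeK k (fst \<kappa>) (snd \<kappa>) x \<noteq> 0"
    if fS: "finite S" for S
    using fS
  proof (induction S rule: finite_induct)
    case empty
    then show ?case using ne unfolding E_def by auto
  next
    case (insert \<kappa> S)
    then obtain x where xE: "x \<in> E" and xS: "\<forall>\<kappa>\<in>S. (\<exists>y\<in>E. nodeK k (fst \<kappa>) (snd \<kappa>) y \<noteq> 0) \<longrightarrow> nodeK k (fst \<kappa>) (snd \<kappa>) x \<noteq> 0"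
      by auto
    show ?case
    proof (cases "(\<exists>y\<in>E. nodeK k (fst \<kappa>) (snd \<kappa>) y \<noteq> 0) \<and> nodeK k (fst \<kappa>) (snd \<kappa>) x = 0")
      case False
      then show ?thesis using xE xS by auto
    next
      case True
      then obtain y where yE: "y \<in> E" and y0: "nodeK k (fst \<kappa>) (snd \<kappa>) y \<noteq> 0" and x0: "nodeK k (fst \<kappa>) (snd \<kappa>) x = 0" by auto
      let ?z = "\<lambda>l. (1 - 1/2) * x l + 1/2 * y l"
      have cc: "?z \<in> E" "\<forall>i j. k \<le> i \<and> i \<le> M \<longrightarrow> nodeK k i j ?z = (1 - 1/2) * nodeK k i j x + 1/2 * nodeK k i j y"
        using cellK_conv[of x k M \<sigma> y "1/2"] xE yE unfolding E_def by auto
      have "\<forall>\<kappa>'\<in>insert \<kappa> S. (\<exists>y\<in>E. nodeK k (fst \<kappa>') (snd \<kappa>') y \<noteq> 0) \<longrightarrow> nodeK k (fst \<kappa>') (snd \<kappa>') ?z \<noteq> 0"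
      proof (intro ballI impI)
        fix \<kappa>' assume k': "\<kappa>' \<in> insert \<kappa> S" and ex: "\<exists>y\<in>E. nodeK k (fst \<kappa>') (snd \<kappa>') y \<noteq> 0"
        have r: "k \<le> fst \<kappa>' \<and> fst \<kappa>' \<le> M \<and> snd \<kappa>' < n (fst \<kappa>')" using k' insert.prems unfolding I_def by auto
        have nz: "nodeK k (fst \<kappa>') (snd \<kappa>') ?z = (1 - 1/2) * nodeK k (fst \<kappa>') (snd \<kappa>') x + 1/2 * nodeK k (fst \<kappa>') (snd \<kappa>') y"
          using cc(2) r by blast
        show "nodeK k (fst \<kappa>') (snd \<kappa>') ?z \<noteq> 0"
        proof (cases "\<kappa>' = \<kappa>")
          case True
          then show ?thesis using nz x0 y0 by simp
        next
          case False
          then have xnz: "nodeK k (fst \<kappa>') (snd \<kappa>') x \<noteq> 0" using xS k' ex by auto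
          have "signcond (\<sigma> (fst \<kappa>') (snd \<kappa>')) (nodeK k (fst \<kappa>') (snd \<kappa>') x)"
               "signcond (\<sigma> (fst \<kappa>') (snd \<kappa>')) (nodeK k (fst \<kappa>') (snd \<kappa>') y)"
            using xE yE r unfolding E_def cellK_def by blast+
          from same_sign_nz[OF this xnz, of "1/2"] show ?thesis using nz by simp
        qed
      qed
      then show ?thesis using cc(1) by blast
    qed
  qed
  obtain x where xE: "x \<in> E" and xI: "\<forall>\<kappa>\<in>I. (\<exists>y\<in>E. nodeK k (fst \<kappa>) (snd \<kappa>) y \<noteq> 0) \<longrightarrow> nodeK k (fst \<kappa>) (snd \<kappa>) x \<noteq> 0"
    using claim[OF fI] by blast
  have xR: "x \<in> Rsp (n (k - 1))" using xE cellK_Rsp unfolding E_def by blast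
  have "E = cellK k M (svK k M x)"
  proof (intro set_eqI iffI)
    fix y assume yE: "y \<in> E"
    have "\<forall>i j. k \<le> i \<and> i \<le> M \<and> j < n i \<longrightarrow> signcond (svK k M x i j) (nodeK k i j y)"
    proof (intro allI impI)
      fix i j assume r: "k \<le> i \<and> i \<le> M \<and> j < n i"
      then have sv: "svK k M x i j = sgnz (nodeK k i j x)" unfolding svK_def by simp
      show "signcond (svK k M x i j) (nodeK k i j y)"
      proof (cases "nodeK k i j x = 0")
        case True
        then have "nodeK k i j y = 0" using xI yE r unfolding I_def by force
        then show ?thesis by (simp add: signcond_zero)
      next
        case False
        have "signcond (\<sigma> i j) (nodeK k i j x)" "signcond (\<sigma> i j) (nodeK k i j y)"
          using xE yE r unfolding E_def cellK_def by blast+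
        then show ?thesis using signcond_nz[OF _ False] sv by simp
      qed
    qed
    then show "y \<in> cellK k M (svK k M x)" using yE cellK_Rsp unfolding E_def cellK_def by blast
  next
    fix y assume y: "y \<in> cellK k M (svK k M x)"
    have "\<forall>i j. k \<le> i \<and> i \<le> M \<and> j < n i \<longrightarrow> signcond (\<sigma> i j) (nodeK k i j y)"
    proof (intro allI impI)
      fix i j assume r: "k \<le> i \<and> i \<le> M \<and> j < n i"
      then have sv: "svK k M x i j = sgnz (nodeK k i j x)" unfolding svK_def by simp
      have sy: "signcond (svK k M x i j) (nodeK k i j y)" using y r unfolding cellK_def by blast
      show "signcond (\<sigma> i j) (nodeK k i j y)"
      proof (cases "nodeK k i j x = 0")
        case True
        then have "nodeK k i j y = 0" using sy sv unfolding signcond_def sgnz_def by simp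
        then show ?thesis by (simp add: signcond_zero)
      next
        case False
        have "signcond (\<sigma> i j) (nodeK k i j x)" using xE r unfolding E_def cellK_def by blast
        then have "\<sigma> i j = sgnz (nodeK k i j x)" using signcond_nz False by blast
        then show ?thesis using sy sv by simp
      qed
    qed
    then show "y \<in> E" using y cellK_Rsp unfolding E_def cellK_def by blast
  qed
  then show ?thesis using xE unfolding E_def by blast
qed

lemma tangent:
  assumes x: "x \<in> Rsp (n (k - 1))" and d: "d \<in> Rsp (n (k - 1))"
    and z: "\<forall>i j. k \<le> i \<and> i \<le> M \<and> j < n i \<and> svK k M x i j = 0 \<longrightarrow> gK k (svK k M x) i j (\<lambda>l. x l + d l) = 0"
  shows "\<forall>\<^sub>F s in at_right 0. svK k M (\<lambda>l. x l + s * d l) = svK k M x"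
proof -
  define \<sigma> where "\<sigma> = svK k M x"
  define I where "I = {(i, j). k \<le> i \<and> i \<le> M \<and> j < n i}"
  have fI: "finite I" unfolding I_def by (rule finite_idx)
  have xE: "x \<in> cellK k M \<sigma>" unfolding \<sigma>_def by (rule exact_in_cell[OF x])
  have gx: "\<And>i j. k \<le> i \<Longrightarrow> i \<le> M \<Longrightarrow> gK k \<sigma> i j x = nodeK k i j x"
    using cellK_node_g[OF xE] by simp
  have gs: "gK k \<sigma> i j (\<lambda>l. x l + s * d l) = gK k \<sigma> i j x + s * (gK k \<sigma> i j d - gK k \<sigma> i j zv)"
    if "k \<le> i" for i j s
  proof -
    have a: "affn (n (k - 1)) (gK k \<sigma> i j)" using affn_gK that .
    show ?thesis using affn_plus[OF a, of x "\<lambda>l. s * d l"] affn_scale[OF a, of s d] by simp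
  qed
  have "\<forall>\<kappa>\<in>I. \<forall>\<^sub>F s in at_right 0. sgnz (gK k \<sigma> (fst \<kappa>) (snd \<kappa>) (\<lambda>l. x l + s * d l)) = \<sigma> (fst \<kappa>) (snd \<kappa>)"
  proof
    fix \<kappa> assume "\<kappa> \<in> I"
    then obtain i j where \<kappa>: "\<kappa> = (i, j)" and r: "k \<le> i" "i \<le> M" "j < n i" unfolding I_def by auto
    have sx: "\<sigma> i j = sgnz (gK k \<sigma> i j x)" using r gx unfolding \<sigma>_def svK_def by simp
    show "\<forall>\<^sub>F s in at_right 0. sgnz (gK k \<sigma> (fst \<kappa>) (snd \<kappa>) (\<lambda>l. x l + s * d l)) = \<sigma> (fst \<kappa>) (snd \<kappa>)"
    proof (cases "\<sigma> i j = 0")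
      case True
      have g0: "gK k \<sigma> i j x = 0" using True sx unfolding sgnz_def by (auto split: if_splits)
      have "gK k \<sigma> i j (\<lambda>l. x l + d l) = 0" using z r True unfolding \<sigma>_def by blast
      then have "gK k \<sigma> i j d - gK k \<sigma> i j zv = 0" using affn_plus[OF affn_gK[OF r(1)], of \<sigma> j x d] g0 by simp
      then show ?thesis using gs[OF r(1)] g0 True \<kappa> by (simp add: sgnz_def)
    next
      case False
      then have "gK k \<sigma> i j x \<noteq> 0" using sx unfolding sgnz_def by auto
      from ev_sign[OF this, of "gK k \<sigma> i j d - gK k \<sigma> i j zv"]
      show ?thesis using gs[OF r(1)] sx \<kappa> by simp
    qed
  qed
  from eventually_ball_finite[OF fI this]
  show ?thesis
  proof eventually_elim
    case (elim s)
    let ?y = "\<lambda>l. x l + s * d l"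
    have yR: "?y \<in> Rsp (n (k - 1))" using x d unfolding Rsp_def by auto
    have sg: "sgnz (gK k \<sigma> i j ?y) = \<sigma> i j" if "k \<le> i" "i \<le> M" "j < n i" for i j
    proof -
      have "(i, j) \<in> I" using that unfolding I_def by simp
      then show ?thesis using elim by fastforce
    qed
    have "\<forall>i j. k \<le> i \<and> i \<le> M \<and> j < n i \<longrightarrow> signcond (\<sigma> i j) (gK k \<sigma> i j ?y)"
      using sg sgnz_signcond_eq by metis
    then have yE: "?y \<in> cellK k M \<sigma>" unfolding cellK_alt using yR by blast
    show ?case
    proof (intro ext)
      fix i j
      show "svK k M ?y i j = svK k M x i j"
      proof (cases "k \<le> i \<and> i \<le> M \<and> j < n i")
        case True
        then show ?thesis using sg[of i j] cellK_node_g[OF yE, of i j] unfolding svK_def \<sigma>_def by auto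
      next
        case False
        then have "svK k M ?y i j = 0" "svK k M x i j = 0" unfolding svK_def by auto
        then show ?thesis by simp
      qed
    qed
  qed
qed

lemma one_layer:
  assumes ez: "\<forall>j<n k. affmap n W b k p j = 0 \<longrightarrow> affmap n W b k (\<lambda>l. p l + e l) j = 0"
  shows "\<forall>\<^sub>F s in at_right 0. \<forall>j\<in>{..<n k}. sgnz (affmap n W b k (\<lambda>l. p l + s * (e l + (q l - p l))) j) =
     (if sgnz (affmap n W b k p j) \<noteq> 0 then sgnz (affmap n W b k p j) else sgnz (affmap n W b k q j))"
proof (rule eventually_ball_finite)
  show "finite {..<n k}" by simp
  show "\<forall>j\<in>{..<n k}. \<forall>\<^sub>F s in at_right 0. sgnz (affmap n W b k (\<lambda>l. p l + s * (e l + (q l - p l))) j) =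
     (if sgnz (affmap n W b k p j) \<noteq> 0 then sgnz (affmap n W b k p j) else sgnz (affmap n W b k q j))"
  proof
    fix j assume j: "j \<in> {..<n k}"
    define g where "g = (\<lambda>x. affmap n W b k x j)"
    have a: "affn (n (k - 1)) g" unfolding g_def by (rule affn_affmap)
    define w where "w = (\<lambda>l. e l + (q l - p l))"
    have gs: "g (\<lambda>l. p l + s * w l) = g p + s * (g w - g zv)" for s
      using affn_plus[OF a, of p "\<lambda>l. s * w l"] affn_scale[OF a, of s w] by simp
    have gw: "g w - g zv = (g e - g zv) + ((g q - g zv) - (g p - g zv))"
      unfolding w_def using affn_add2[OF a, of e "\<lambda>l. q l - p l"] affn_minus[OF a, of q p] by simp
    have ge: "g (\<lambda>l. p l + e l) = g p + (g e - g zv)" using affn_plus[OF a] .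
    show "\<forall>\<^sub>F s in at_right 0. sgnz (affmap n W b k (\<lambda>l. p l + s * (e l + (q l - p l))) j) =
     (if sgnz (affmap n W b k p j) \<noteq> 0 then sgnz (affmap n W b k p j) else sgnz (affmap n W b k q j))"
    proof (cases "g p = 0")
      case True
      then have "g (\<lambda>l. p l + e l) = 0" using ez j unfolding g_def by auto
      then have "g e - g zv = 0" using ge True by simp
      then have eq: "g (\<lambda>l. p l + s * w l) = s * g q" for s using gs gw True by simp
      show ?thesis using eventually_at_right_less[of 0]
      proof eventually_elim
        case (elim s)
        have "sgnz (s * g q) = sgnz (g q)" using elim unfolding sgnz_def
          by (auto simp: zero_less_mult_iff mult_less_0_iff)
        then show ?case using eq[of s] True unfolding g_def w_def by (simp add: sgnz_def)
      qed
    next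
      case False
      from ev_sign[OF False, of "g w - g zv"]
      show ?thesis
      proof eventually_elim
        case (elim s)
        have "sgnz (g p) \<noteq> 0" using False unfolding sgnz_def by auto
        then show ?case using elim gs[of s] unfolding g_def w_def by simp
      qed
    qed
  qed
qed

lemma dir_u:
  assumes dd: "dirderiv (layer n W b k) p v u"
    and vz: "\<forall>j<n k. affmap n W b k p j = 0 \<longrightarrow> affmap n W b k (\<lambda>l. p l + v l) j = 0"
    and sp1: "\<forall>j<n k. affmap n W b k p j > 0 \<longrightarrow> sp j = 1"
    and sp2: "\<forall>j<n k. affmap n W b k p j < 0 \<longrightarrow> sp j \<noteq> 1"
  shows "u j = (if j < n k \<and> sp j = 1 then affmap n W b k (\<lambda>l. p l + v l) j - affmap n W b k p j else 0)"
proof -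
  define c where "c = (if j < n k \<and> sp j = 1 then affmap n W b k (\<lambda>l. p l + v l) j - affmap n W b k p j else 0)"
  define Q where "Q = (\<lambda>t. (layer n W b k (\<lambda>l. p l + t * v l) j - layer n W b k p j) / t)"
  have lim: "(Q \<longlongrightarrow> u j) (at 0)" using dd unfolding dirderiv_def Q_def by blast
  have ev: "\<forall>\<^sub>F t in at 0. Q t = c"
  proof (cases "j < n k")
    case False
    then show ?thesis unfolding Q_def c_def by (simp add: layer_out)
  next
    case True
    define g where "g = (\<lambda>x. affmap n W b k x j)"
    have a: "affn (n (k - 1)) g" unfolding g_def by (rule affn_affmap)
    define \<beta> where "\<beta> = g (\<lambda>l. p l + v l) - g p"
    have gt: "g (\<lambda>l. p l + t * v l) = g p + t * \<beta>" for t
      using affn_plus[OF a, of p "\<lambda>l. t * v l"] affn_scale[OF a, of t v] affn_plus[OF a, of p v]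
      unfolding \<beta>_def by simp
    have lay: "layer n W b k y j = relu (g y)" for y unfolding layer_def g_def ..
    have tl: "((\<lambda>t. g p + t * \<beta>) \<longlongrightarrow> g p) (at 0)" by (auto intro!: tendsto_eq_intros)
    have nz: "\<forall>\<^sub>F t in at (0::real). t \<noteq> 0" by (rule eventually_neq_at_within)
    consider "g p > 0" | "g p < 0" | "g p = 0" by linarith
    then show ?thesis
    proof cases
      case 1
      have "\<forall>\<^sub>F t in at 0. 0 < g p + t * \<beta>" using order_tendstoD(1)[OF tl 1] .
      then show ?thesis using nz
      proof eventually_elim
        case (elim t)
        have "sp j = 1" using sp1 True 1 unfolding g_def by auto
        then have "c = \<beta>" unfolding c_def \<beta>_def g_def using True by simp
        then show ?case unfolding Q_def lay gt relu_def using elim 1 by simp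
      qed
    next
      case 2
      have "\<forall>\<^sub>F t in at 0. g p + t * \<beta> < 0" using order_tendstoD(2)[OF tl 2] .
      then show ?thesis
      proof eventually_elim
        case (elim t)
        have "sp j \<noteq> 1" using sp2 True 2 unfolding g_def by auto
        then have "c = 0" unfolding c_def by simp
        then show ?case unfolding Q_def lay gt relu_def using elim 2 by simp
      qed
    next
      case 3
      then have "g (\<lambda>l. p l + v l) = 0" using vz True unfolding g_def by auto
      then have b0: "\<beta> = 0" unfolding \<beta>_def using 3 by simp
      have "c = 0" unfolding c_def using 3 \<open>g (\<lambda>l. p l + v l) = 0\<close> unfolding g_def by simp
      then show ?thesis unfolding Q_def lay gt relu_def using 3 b0 by simp
    qed
  qed
  have "(Q \<longlongrightarrow> c) (at 0)" using tendsto_cong[OF ev] by simp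
  then have "u j = c" using tendsto_unique[OF at_neq_bot lim] by simp
  then show ?thesis unfolding c_def .
qed

lemma sv_decomp:
  assumes "k \<le> M"
  shows "svK k M x i j = (if i = k then (if j < n k then sgnz (affmap n W b k x j) else 0)
           else svK (Suc k) M (layer n W b k x) i j)"
proof (cases "i = k")
  case True then show ?thesis using assms unfolding svK_def by (simp add: nodeK_self)
next
  case False
  show ?thesis
  proof (cases "k < i")
    case True
    then show ?thesis using False unfolding svK_def by (auto simp: nodeK_shift)
  next
    case F2: False
    then show ?thesis using False unfolding svK_def by auto
  qed
qed

lemma Lj_affn: "affn (n (k - 1)) (\<lambda>y. if j < n k \<and> sp j = (1::int) then affmap n W b k y j else 0)"
proof (cases "j < n k \<and> sp j = 1")
  case True then show ?thesis using affn_affmap by simp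
next
  case False
  then have e: "(\<lambda>y. if j < n k \<and> sp j = (1::int) then affmap n W b k y j else 0) = (\<lambda>y. 0)" by auto
  show ?thesis unfolding e by (rule affn_const)
qed

lemma step:
  assumes st: "supertransversal m n W b" and k1: "1 \<le> k" and km: "k \<le> m"
    and IH: "\<forall>p\<in>Rsp (n k). \<forall>q\<in>Rsp (n k). \<exists>r\<in>Rsp (n k).
               svK (Suc k) (Suc m) r = sprod (svK (Suc k) (Suc m) p) (svK (Suc k) (Suc m) q)"
    and p: "p \<in> Rsp (n (k - 1))" and q: "q \<in> Rsp (n (k - 1))"
  shows "\<exists>r\<in>Rsp (n (k - 1)). svK k (Suc m) r = sprod (svK k (Suc m) p) (svK k (Suc m) q)"
proof -
  define M where "M = Suc m"
  define a where "a = layer n W b k p"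
  define a' where "a' = layer n W b k q"
  have aR: "a \<in> Rsp (n k)" "a' \<in> Rsp (n k)" unfolding a_def a'_def by (rule layer_Rsp)+
  define \<tau> where "\<tau> = sprod (svK (Suc k) M a) (svK (Suc k) M a')"
  obtain c where cR: "c \<in> Rsp (n k)" and c\<tau>: "svK (Suc k) M c = \<tau>"
    using IH aR unfolding \<tau>_def M_def by blast
  define C1 where "C1 = cellK k k (svK k k p)"
  define K where "K = cellK (Suc k) M (svK (Suc k) M a)"
  have pC1: "p \<in> C1" unfolding C1_def by (rule exact_in_cell[OF p])
  have aR': "a \<in> Rsp (n (Suc k - 1))" using aR by simp
  have aK: "a \<in> K" unfolding K_def by (rule exact_in_cell[OF aR'])
  have C1R: "C1 \<in> Rcells n W b k" unfolding Rcells_char C1_def using pC1 C1_def by blast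
  have KC: "K \<in> cplx n W b (Suc k) (m - k)" unfolding cplx_char K_def M_def using aK km K_def M_def
    by (auto intro!: exI[of _ "svK (Suc k) (Suc m) a"])
  have prel: "p \<in> relint C1" unfolding C1_def by (rule relint_exact[OF p])
  have arel: "a \<in> relint K" unfolding K_def by (rule relint_exact[OF aR'])
  have tr: "transverse_on_cell (layer n W b k) C1 (n k) (relint K)"
    using st k1 km C1R KC unfolding supertransversal_def by blast
  then have trp: "\<forall>w\<in>Rsp (n k). \<exists>v\<in>tspace (relint C1). \<exists>u z. dirderiv (layer n W b k) p v u \<and> z \<in> tspace (relint K) \<and>
                     w = (\<lambda>j. u j + z j)"
    using prel arel unfolding transverse_on_cell_def a_def by blast
  define sp where "sp = (\<lambda>j. if sgnz (affmap n W b k p j) \<noteq> 0 then sgnz (affmap n W b k p j) else sgnz (affmap n W b k q j))"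
  define L where "L = (\<lambda>y j. if j < n k \<and> sp j = 1 then affmap n W b k y j else 0)"
  have Laff: "affn (n (k - 1)) (\<lambda>y. L y j)" for j unfolding L_def by (rule Lj_affn)
  have LR: "L y \<in> Rsp (n k)" for y unfolding L_def Rsp_def by auto
  have sp1: "\<forall>j<n k. affmap n W b k p j > 0 \<longrightarrow> sp j = 1" unfolding sp_def sgnz_def by auto
  have sp2: "\<forall>j<n k. affmap n W b k p j < 0 \<longrightarrow> sp j \<noteq> 1" unfolding sp_def sgnz_def by auto
  have Lp: "L p = a"
  proof
    fix j show "L p j = a j"
      unfolding L_def a_def layer_def relu_def sp_def sgnz_def
      by (auto simp: affmap_out)
  qed
  have w1: "(\<lambda>l. c l - a l) \<in> Rsp (n k)" using cR aR unfolding Rsp_def by auto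
  have w2: "(\<lambda>l. L q l - a l) \<in> Rsp (n k)" using LR aR unfolding Rsp_def by auto
  obtain v1 u1 z1 where v1: "v1 \<in> tspace (relint C1)" "dirderiv (layer n W b k) p v1 u1" "z1 \<in> tspace (relint K)"
    "(\<lambda>l. c l - a l) = (\<lambda>j. u1 j + z1 j)" using trp w1 by blast
  obtain v2 u2 z2 where v2: "v2 \<in> tspace (relint C1)" "dirderiv (layer n W b k) p v2 u2" "z2 \<in> tspace (relint K)"
    "(\<lambda>l. L q l - a l) = (\<lambda>j. u2 j + z2 j)" using trp w2 by blast
  have C1R': "C1 \<subseteq> Rsp (n (k - 1))" unfolding C1_def by (rule cellK_Rsp)
  have KR: "K \<subseteq> Rsp (n (Suc k - 1))" unfolding K_def by (rule cellK_Rsp)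
  have v1R: "v1 \<in> Rsp (n (k - 1))" using tspace_Rsp[OF C1R' v1(1)] .
  have v2R: "v2 \<in> Rsp (n (k - 1))" using tspace_Rsp[OF C1R' v2(1)] .
  have z1R: "z1 \<in> Rsp (n k)" using tspace_Rsp[OF KR v1(3)] by simp
  have z2R: "z2 \<in> Rsp (n k)" using tspace_Rsp[OF KR v2(3)] by simp
  have am: "affn (n (k - 1)) (\<lambda>x. affmap n W b k x j)" for j by (rule affn_affmap)
  have tv: "\<forall>j<n k. affmap n W b k p j = 0 \<longrightarrow> affmap n W b k (\<lambda>l. p l + v l) j = 0"
    if v: "v \<in> tspace (relint C1)" for v
  proof (intro allI impI)
    fix j assume j: "j < n k" and z: "affmap n W b k p j = 0"
    have "\<forall>y\<in>C1. affmap n W b k y j = 0"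
    proof
      fix y assume "y \<in> C1"
      then have "signcond (svK k k p k j) (affmap n W b k y j)" using j unfolding C1_def cellK_single by blast
      moreover have "svK k k p k j = 0" using j z unfolding svK_def nodeK_self sgnz_def by simp
      ultimately show "affmap n W b k y j = 0" unfolding signcond_def by simp
    qed
    from affn_tspace[OF am this v] show "affmap n W b k (\<lambda>l. p l + v l) j = 0" using z by simp
  qed
  have lin_v: "affmap n W b k v j - affmap n W b k zv j = 0"
    if v: "v \<in> tspace (relint C1)" and j: "j < n k" and z: "affmap n W b k p j = 0" for v j
    using tv[OF v] j z affn_plus[OF am, of p v] by simp
  define e where "e = (\<lambda>l. v1 l - v2 l)"
  have ez: "\<forall>j<n k. affmap n W b k p j = 0 \<longrightarrow> affmap n W b k (\<lambda>l. p l + e l) j = 0"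
  proof (intro allI impI)
    fix j assume j: "j < n k" and z: "affmap n W b k p j = 0"
    have "affmap n W b k (\<lambda>l. p l + e l) j = affmap n W b k p j + ((affmap n W b k v1 j - affmap n W b k zv j) - (affmap n W b k v2 j - affmap n W b k zv j))"
      unfolding e_def using affn_plus[OF am, of p "\<lambda>l. v1 l - v2 l"] affn_minus[OF am, of v1 v2] by simp
    then show "affmap n W b k (\<lambda>l. p l + e l) j = 0" using lin_v[OF v1(1) j z] lin_v[OF v2(1) j z] z by simp
  qed
  have u1: "u1 j = L (\<lambda>l. p l + v1 l) j - L p j" for j
    using dir_u[OF v1(2) tv[OF v1(1)] sp1 sp2, of j] unfolding L_def by simp
  have u2: "u2 j = L (\<lambda>l. p l + v2 l) j - L p j" for j
    using dir_u[OF v2(2) tv[OF v2(1)] sp1 sp2, of j] unfolding L_def by simp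
  define \<sigma>a where "\<sigma>a = svK (Suc k) M a"
  define d where "d = (\<lambda>l. 2 * (z2 l - z1 l))"
  have dR: "d \<in> Rsp (n (Suc k - 1))" using z1R z2R unfolding d_def Rsp_def by auto
  have dz: "\<forall>i j. Suc k \<le> i \<and> i \<le> M \<and> j < n i \<and> \<sigma>a i j = 0 \<longrightarrow> gK (Suc k) \<sigma>a i j (\<lambda>l. a l + d l) = 0"
  proof (intro allI impI)
    fix i j assume h: "Suc k \<le> i \<and> i \<le> M \<and> j < n i \<and> \<sigma>a i j = 0"
    define g where "g = gK (Suc k) \<sigma>a i j"
    have ag: "affn (n (Suc k - 1)) g" unfolding g_def by (rule affn_gK) (use h in simp)
    have van: "\<forall>y\<in>K. g y = 0"
    proof
      fix y assume yK: "y \<in> K"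
      have "signcond (\<sigma>a i j) (nodeK (Suc k) i j y)" using yK h unfolding K_def \<sigma>a_def cellK_def by blast
      moreover have "nodeK (Suc k) i j y = g y" using cellK_node_g[of y "Suc k" M \<sigma>a i j] yK h
        unfolding g_def K_def \<sigma>a_def by simp
      ultimately show "g y = 0" using h unfolding signcond_def by simp
    qed
    have ga: "g a = 0" using van aK by blast
    have lz: "g z - g zv = 0" if "z \<in> tspace (relint K)" for z
      using affn_tspace[OF ag van that, of a] affn_plus[OF ag, of a z] by simp
    have "g d - g zv = 2 * ((g z2 - g zv) - (g z1 - g zv))"
      unfolding d_def using affn_scale[OF ag, of 2 "\<lambda>l. z2 l - z1 l"] affn_minus[OF ag, of z2 z1] by simp
    then have "g d - g zv = 0" using lz[OF v1(3)] lz[OF v2(3)] by simp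
    then show "gK (Suc k) \<sigma>a i j (\<lambda>l. a l + d l) = 0"
      using affn_plus[OF ag, of a d] ga unfolding g_def by simp
  qed
  have ev2: "\<forall>\<^sub>F s in at_right 0. svK (Suc k) M (\<lambda>l. a l + s * d l) = \<sigma>a"
    using tangent[OF aR' dR] dz unfolding \<sigma>a_def by blast
  note ev1 = one_layer[OF ez, of q]
  have ev3: "\<forall>\<^sub>F s in at_right 0. 1 * s < (1::real) / 2" by (rule ev_lt) simp
  obtain s where s: "s > 0" "s < 1/2"
     and sg: "\<forall>j\<in>{..<n k}. sgnz (affmap n W b k (\<lambda>l. p l + s * (e l + (q l - p l))) j) = sp j"
     and sY: "svK (Suc k) M (\<lambda>l. a l + s * d l) = \<sigma>a"
  proof -
    have "\<forall>\<^sub>F s in at_right 0. (\<forall>j\<in>{..<n k}. sgnz (affmap n W b k (\<lambda>l. p l + s * (e l + (q l - p l))) j) = sp j)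
        \<and> svK (Suc k) M (\<lambda>l. a l + s * d l) = \<sigma>a \<and> 1 * s < 1/2"
      using ev1 ev2 ev3 unfolding sp_def by eventually_elim auto
    from ev_exists[OF this] show ?thesis using that by auto
  qed
  define r where "r = (\<lambda>l. p l + s * (e l + (q l - p l)))"
  have rR: "r \<in> Rsp (n (k - 1))" using p q v1R v2R unfolding r_def e_def Rsp_def by auto
  have lay: "layer n W b k r = L r"
  proof
    fix j show "layer n W b k r j = L r j"
    proof (cases "j < n k")
      case True
      then have "sgnz (affmap n W b k r j) = sp j" using sg unfolding r_def by auto
      then show ?thesis unfolding layer_def L_def relu_def sgnz_def using True
        by (auto split: if_splits)
    next
      case False then show ?thesis unfolding L_def by (simp add: layer_out)
    qed
  qed
  have Lr: "L r = (\<lambda>j. a j + s * (c j - a j - z1 j + z2 j))"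
  proof
    fix j
    define g where "g = (\<lambda>y. L y j)"
    have ag: "affn (n (k - 1)) g" unfolding g_def by (rule Laff)
    have e1: "g r = g p + s * ((g e - g zv) + ((g q - g zv) - (g p - g zv)))"
      unfolding r_def
      using affn_plus[OF ag, of p "\<lambda>l. s * (e l + (q l - p l))"] affn_scale[OF ag, of s "\<lambda>l. e l + (q l - p l)"]
        affn_add2[OF ag, of e "\<lambda>l. q l - p l"] affn_minus[OF ag, of q p] by simp
    have e2: "g e - g zv = (g v1 - g zv) - (g v2 - g zv)" unfolding e_def by (rule affn_minus[OF ag])
    have e3: "u1 j = g v1 - g zv" "u2 j = g v2 - g zv"
      using u1[of j] u2[of j] affn_plus[OF ag, of p v1] affn_plus[OF ag, of p v2] unfolding g_def by simp_all
    have e4: "c j - a j = u1 j + z1 j" "L q j - a j = u2 j + z2 j" using v1(4) v2(4) by meson+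
    have e5: "g p = a j" using Lp unfolding g_def by simp
    have e6: "g r = g p + s * ((u1 j - u2 j) + (g q - g p))" using e1 e2 e3 by simp
    then have e7: "L r j = a j + s * ((u1 j - u2 j) + (L q j - a j))" using e5 unfolding g_def by simp
    have "(u1 j - u2 j) + (L q j - a j) = c j - a j - z1 j + z2 j" using e4 by linarith
    then show "L r j = a j + s * (c j - a j - z1 j + z2 j)" using e7 by simp
  qed
  define X where "X = (\<lambda>l. (1 - 2 * s) * a l + (2 * s) * c l)"
  define Y where "Y = (\<lambda>l. a l + s * d l)"
  have aT: "a \<in> cellK (Suc k) M \<tau>" using aK cellK_refine unfolding K_def \<tau>_def by blast
  have cR': "c \<in> Rsp (n (Suc k - 1))" using cR by simp
  have sX: "svK (Suc k) M X = \<tau>" unfolding X_def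
    using cellK_conv_exact[OF aT cR' c\<tau>, of "2 * s"] s by simp
  have XR: "X \<in> Rsp (n (Suc k - 1))" using aR cR unfolding X_def Rsp_def by auto
  have YR: "Y \<in> Rsp (n (Suc k - 1))" using aR z1R z2R unfolding Y_def d_def Rsp_def by auto
  have YT: "Y \<in> cellK (Suc k) M \<tau>"
  proof -
    have "Y \<in> cellK (Suc k) M \<sigma>a" using exact_in_cell[OF YR, of M] sY unfolding Y_def by simp
    then show ?thesis using cellK_refine[of "Suc k" M \<sigma>a "svK (Suc k) M a'"] unfolding \<sigma>a_def \<tau>_def by blast
  qed
  have "layer n W b k r = (\<lambda>l. (1 - 1/2) * Y l + 1/2 * X l)"
    unfolding lay Lr X_def Y_def d_def by (auto simp: algebra_simps)
  then have sr: "svK (Suc k) M (layer n W b k r) = \<tau>"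
    using cellK_conv_exact[OF YT XR sX, of "1/2"] by simp
  have "svK k M r = sprod (svK k M p) (svK k M q)"
  proof (intro ext)
    fix i j
    have kM: "k \<le> M" unfolding M_def using km by simp
    show "svK k M r i j = sprod (svK k M p) (svK k M q) i j"
    proof (cases "i = k")
      case True
      show ?thesis
      proof (cases "j < n k")
        case True
        then have "sgnz (affmap n W b k r j) = sp j" using sg unfolding r_def by auto
        then show ?thesis using True \<open>i = k\<close> sv_decomp[OF kM] unfolding sprod_def sp_def by simp
      next
        case False
        then show ?thesis using \<open>i = k\<close> sv_decomp[OF kM] unfolding sprod_def by simp
      qed
    next
      case False
      then show ?thesis using sv_decomp[OF kM] sr unfolding \<tau>_def sprod_def a_def a'_def by simp
    qed
  qed
  then show ?thesis using rR unfolding M_def by blast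
qed

lemma base:
  assumes p: "p \<in> Rsp (n m)" and q: "q \<in> Rsp (n m)"
  shows "\<exists>r\<in>Rsp (n m). svK (Suc m) (Suc m) r = sprod (svK (Suc m) (Suc m) p) (svK (Suc m) (Suc m) q)"
proof -
  define k where "k = Suc m"
  have pe: "(\<lambda>l. p l + zv l) = p" unfolding zv_def by simp
  have ez: "\<forall>j<n k. affmap n W b k p j = 0 \<longrightarrow> affmap n W b k (\<lambda>l. p l + zv l) j = 0"
    unfolding pe by simp
  obtain s where s: "s > 0" and sg: "\<forall>j\<in>{..<n k}. sgnz (affmap n W b k (\<lambda>l. p l + s * (zv l + (q l - p l))) j) =
     (if sgnz (affmap n W b k p j) \<noteq> 0 then sgnz (affmap n W b k p j) else sgnz (affmap n W b k q j))"
    using ev_exists[OF one_layer[OF ez, of q]] by blast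
  define r where "r = (\<lambda>l. p l + s * (zv l + (q l - p l)))"
  have rR: "r \<in> Rsp (n m)" using p q unfolding r_def Rsp_def zv_def by auto
  have kk: "k \<le> k" by simp
  have z: "svK (Suc k) k x i j = 0" for x i j unfolding svK_def by simp
  have "svK k k r = sprod (svK k k p) (svK k k q)"
  proof (intro ext)
    fix i j
    show "svK k k r i j = sprod (svK k k p) (svK k k q) i j"
    proof (cases "i = k \<and> j < n k")
      case True
      then show ?thesis using sg sv_decomp[OF kk] unfolding sprod_def r_def by simp
    next
      case False
      then show ?thesis using sv_decomp[OF kk] z unfolding sprod_def by auto
    qed
  qed
  then show ?thesis using rR unfolding k_def by blast
qed

lemma mainP:
  assumes st: "supertransversal m n W b"
  shows "d \<le> m \<Longrightarrow> \<forall>p\<in>Rsp (n (m - d)). \<forall>q\<in>Rsp (n (m - d)). \<exists>r\<in>Rsp (n (m - d)).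
     svK (Suc m - d) (Suc m) r = sprod (svK (Suc m - d) (Suc m) p) (svK (Suc m - d) (Suc m) q)"
proof (induction d)
  case 0
  then show ?case using base by simp
next
  case (Suc d)
  define k where "k = m - d"
  have e: "Suc m - d = Suc k" "m - d = k" "m - Suc d = k - 1" "Suc m - Suc d = k" using Suc.prems unfolding k_def by auto
  have IH: "\<forall>p\<in>Rsp (n k). \<forall>q\<in>Rsp (n k). \<exists>r\<in>Rsp (n k).
               svK (Suc k) (Suc m) r = sprod (svK (Suc k) (Suc m) p) (svK (Suc k) (Suc m) q)"
    using Suc.IH Suc.prems unfolding e by simp
  have k1: "1 \<le> k" "k \<le> m" using Suc.prems unfolding k_def by auto
  show ?case unfolding e using step[OF st k1 IH] by blast
qed

lemma signseq_svK: "signseq m n W b X = svK 1 (Suc m) (SOME x. x \<in> relint X)"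
  unfolding signseq_def svK_def node_nodeK by simp

lemma cellinfo:
  assumes "X \<in> cplx n W b 1 m"
  shows "(SOME x. x \<in> relint X) \<in> relint X \<and> X = cellK 1 (Suc m) (svK 1 (Suc m) (SOME x. x \<in> relint X))
     \<and> (SOME x. x \<in> relint X) \<in> Rsp (n 0)"
proof -
  obtain \<sigma> where X: "X \<noteq> {}" "X = cellK 1 (Suc m) \<sigma>" using assms unfolding cplx_char by auto
  obtain x where xX: "x \<in> X" and Xx: "X = cellK 1 (Suc m) (svK 1 (Suc m) x)"
    using cell_generic[of 1 "Suc m" \<sigma>] X by auto
  have xR: "x \<in> Rsp (n (1 - 1))" using xX Xx cellK_Rsp by blast
  have "x \<in> relint X" using relint_exact[OF xR, of "Suc m"] Xx by simp
  then have y: "(SOME x. x \<in> relint X) \<in> relint X" by (rule someI[of "\<lambda>x. x \<in> relint X"])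
  have sv: "svK 1 (Suc m) (SOME x. x \<in> relint X) = svK 1 (Suc m) x"
    by (rule relint_sv[OF _ xR refl]) (use y Xx in simp)
  have "(SOME x. x \<in> relint X) \<in> Rsp (n 0)" using y relint_sub cellK_Rsp Xx by fastforce
  then show ?thesis using y sv Xx by simp
qed

lemma final:
  assumes st: "supertransversal m n W b"
    and C: "C \<in> cplx n W b 1 m" and D: "D \<in> cplx n W b 1 m"
  shows "\<exists>E\<in>cplx n W b 1 m.
           sprod (signseq m n W b C) (signseq m n W b D) = signseq m n W b E \<and> face_le C E"
proof -
  define M where "M = Suc m"
  define xC where "xC = (SOME x. x \<in> relint C)"
  define xD where "xD = (SOME x. x \<in> relint D)"
  have iC: "xC \<in> relint C" "C = cellK 1 M (svK 1 M xC)" "xC \<in> Rsp (n 0)"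
    using cellinfo[OF C] unfolding xC_def M_def by auto
  have iD: "xD \<in> relint D" "D = cellK 1 M (svK 1 M xD)" "xD \<in> Rsp (n 0)"
    using cellinfo[OF D] unfolding xD_def M_def by auto
  define \<sigma>C where "\<sigma>C = svK 1 M xC"
  define \<tau> where "\<tau> = sprod (svK 1 M xC) (svK 1 M xD)"
  have mp: "\<forall>p\<in>Rsp (n 0). \<forall>q\<in>Rsp (n 0). \<exists>r\<in>Rsp (n 0). svK 1 M r = sprod (svK 1 M p) (svK 1 M q)"
    using mainP[OF st, of m] unfolding M_def by simp
  obtain r where rR: "r \<in> Rsp (n 0)" and r\<tau>: "svK 1 M r = \<tau>" using mp iC(3) iD(3) unfolding \<tau>_def by blast
  define E where "E = cellK 1 M \<tau>"
  have rR': "r \<in> Rsp (n (1 - 1))" using rR by simp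
  have rE: "r \<in> E" unfolding E_def using exact_in_cell[OF rR', of M] r\<tau> by simp
  have EC: "E \<in> cplx n W b 1 m" unfolding cplx_char E_def M_def using rE E_def M_def by auto
  have rrel: "r \<in> relint E" unfolding E_def using relint_exact[OF rR', of M] r\<tau> by simp
  have xE: "(SOME x. x \<in> relint E) \<in> relint E" using rrel by (rule someI[of "\<lambda>x. x \<in> relint E"])
  have sE: "svK 1 M (SOME x. x \<in> relint E) = \<tau>" by (rule relint_sv[OF _ rR' r\<tau>]) (use xE E_def in simp)
  have sq: "sprod (signseq m n W b C) (signseq m n W b D) = signseq m n W b E"
    unfolding signseq_svK sE[unfolded M_def] using \<tau>_def xC_def xD_def M_def by simp
  have CE: "C \<subseteq> E" unfolding E_def \<tau>_def using iC(2) cellK_refine by blast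
  have Cc: "C = cellK 1 M \<sigma>C" using iC(2) unfolding \<sigma>C_def .
  have cvx: "convexset C" unfolding convexset_def Cc using cellK_conv by blast
  have ext: "a \<in> C \<and> b' \<in> C"
    if aE: "a \<in> E" and bE: "b' \<in> E" and xC: "x \<in> C" and tt: "0 < t" "t < 1"
      and xe: "x = (\<lambda>k. (1 - t) * a k + t * b' k)" for a b' x t
  proof -
    have nd: "\<forall>i j. 1 \<le> i \<and> i \<le> M \<longrightarrow> nodeK 1 i j x = (1 - t) * nodeK 1 i j a + t * nodeK 1 i j b'"
      using cellK_conv[OF aE[unfolded E_def] bE[unfolded E_def], of t] tt xe by simp
    have inC: "y \<in> C" if yE: "y \<in> E" and yz: "\<forall>i j. 1 \<le> i \<and> i \<le> M \<and> j < n i \<and> \<sigma>C i j = 0 \<longrightarrow> nodeK 1 i j y = 0" for y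
    proof -
      have "\<forall>i j. 1 \<le> i \<and> i \<le> M \<and> j < n i \<longrightarrow> signcond (\<sigma>C i j) (nodeK 1 i j y)"
      proof (intro allI impI)
        fix i j assume h: "1 \<le> i \<and> i \<le> M \<and> j < n i"
        show "signcond (\<sigma>C i j) (nodeK 1 i j y)"
        proof (cases "\<sigma>C i j = 0")
          case True then show ?thesis using yz h by (simp add: signcond_zero)
        next
          case False
          have "signcond (\<tau> i j) (nodeK 1 i j y)" using yE h unfolding E_def cellK_def by blast
          then show ?thesis using False unfolding \<tau>_def sprod_def \<sigma>C_def by simp
        qed
      qed
      then show ?thesis using yE cellK_Rsp unfolding Cc E_def cellK_def by blast
    qed
    have z: "nodeK 1 i j a = 0 \<and> nodeK 1 i j b' = 0" if h: "1 \<le> i \<and> i \<le> M \<and> j < n i \<and> \<sigma>C i j = 0" for i j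
    proof -
      have "signcond (\<sigma>C i j) (nodeK 1 i j x)" using xC h unfolding Cc cellK_def by blast
      then have x0: "nodeK 1 i j x = 0" using h unfolding signcond_def by simp
      have "signcond (\<tau> i j) (nodeK 1 i j a)" "signcond (\<tau> i j) (nodeK 1 i j b')"
        using aE bE h unfolding E_def cellK_def by blast+
      from zero_sum[OF this tt] show ?thesis using x0 nd h by simp
    qed
    show ?thesis using inC[OF aE] inC[OF bE] z by blast
  qed
  have "faceof C E" unfolding faceof_def using CE cvx ext by blast
  then show ?thesis using EC sq unfolding face_le_def by blast
qed

end

theorem lemma18:
  fixes m :: nat and n :: "nat \<Rightarrow> nat"
    and W :: "nat \<Rightarrow> nat \<Rightarrow> nat \<Rightarrow> real" and b :: "nat \<Rightarrow> nat \<Rightarrow> real"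
    and C D :: "(nat \<Rightarrow> real) set"
  assumes "n (Suc m) = 1"
    and "\<forall>i\<le>Suc m. 1 \<le> n i"
    and "supertransversal m n W b"
    and "C \<in> cplx n W b 1 m" and "D \<in> cplx n W b 1 m"
  shows "\<exists>E\<in>cplx n W b 1 m.
           sprod (signseq m n W b C) (signseq m n W b D) = signseq m n W b E \<and> face_le C E"
  using final[OF assms(3,4,5)] .

end
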